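(* Assume $J$ satisfies (J1), (J2), (J5) and (JP), and $h\equiv0$. Let $u$ be a minimizer for $H$ in $Q_\ell(q)$ for some $q\in\mathbb Z^d$, $\ell\in\mathbb N$. If $q\in\partial u$, then $$I_{Q_\ell(q),Q_\ell(q)}(u)\ge c_\star\,\ell^{d-s},$$ for a constant $c_\star>0$ depending only on $d$, $s$, $\lambda$ and $\Lambda$.
   Context: Fix $d\ge2$, $|x|:=\sum_n|x_n|$, $|x|_\infty:=\max_n|x_n|$. Configurations are maps $u:\mathbb Z^d\to\{-1,1\}$; $\partial u:=\{i: u_i=1\text{ and }\exists j,\ |i-j|=1,\ u_j=-1\}$. $I_{\Gamma,\Omega}(u):=\sum_{i\in\Gamma,j\in\Omega}J_{ij}(1-u_iu_j)$. With $h\equiv0$, for finite $\Gamma$: $H_\Gamma(u):=\sum_{(i,j)\in\mathbb Z^{2d}\setminus(\mathbb Z^d\setminus\Gamma)^2}J_{ij}(1-u_iu_j)$; $u$ is a minimizer for $H$ in $\Gamma$ if $H_\Gamma(u)\le H_\Gamma(v)$ for all $v$ agreeing with $u$ outside $\Gamma$. $Q_\ell(q):=\{i\in\mathbb Z^d:|i-q|_\infty\le\ell\}$. Conditions on $J:\mathbb Z^d\times\mathbb Z^d\to[0,\infty)$: (J1) $J_{ij}=J_{ji}$; (J2) $J_{ii}=0$; (J5) $J_{ij}=J_{i'j'}$ whenever $i-i'=j-j'\in\tau\mathbb Z^d$, for some $\tau\in\mathbb N$; (JP) $\lambda|i-j|^{-d-s}\le J_{ij}\le\Lambda|i-j|^{-d-s}$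 for all $i\ne j$, for some $s\in(0,1)$, $\Lambda\ge\lambda>0$. *)

theory Defs
  imports "HOL-Analysis.Analysis"
begin

text \<open>The lattice Z^d is represented by functions nat => int vanishing from index d on.\<close>

definition lat :: "nat \<Rightarrow> (nat \<Rightarrow> int) set" where
  "lat d = {x. \<forall>n\<ge>d. x n = 0}"

definition norm1 :: "nat \<Rightarrow> (nat \<Rightarrow> int) \<Rightarrow> int" where
  "norm1 d x = (\<Sum>n<d. \<bar>x n\<bar>)"

definition cube :: "nat \<Rightarrow> nat \<Rightarrow> (nat \<Rightarrow> int) \<Rightarrow> (nat \<Rightarrow> int) set" where
  "cube d l q = {i \<in> lat d. \<forall>n<d. \<bar>i n - q n\<bar> \<le> int l}"

definition config :: "nat \<Rightarrow> ((nat \<Rightarrow> int) \<Rightarrow> real) \<Rightarrow> bool" where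
  "config d u = (\<forall>i\<in>lat d. u i = -1 \<or> u i = 1)"

definition bdry :: "nat \<Rightarrow> ((nat \<Rightarrow> int) \<Rightarrow> real) \<Rightarrow> (nat \<Rightarrow> int) set" where
  "bdry d u = {i \<in> lat d. u i = 1 \<and> (\<exists>j\<in>lat d. norm1 d (i - j) = 1 \<and> u j = -1)}"

definition Iint :: "((nat \<Rightarrow> int) \<Rightarrow> (nat \<Rightarrow> int) \<Rightarrow> real) \<Rightarrow> (nat \<Rightarrow> int) set
    \<Rightarrow> (nat \<Rightarrow> int) set \<Rightarrow> ((nat \<Rightarrow> int) \<Rightarrow> real) \<Rightarrow> real" where
  "Iint J \<Gamma> \<Omega> u = (\<Sum>i\<in>\<Gamma>. \<Sum>j\<in>\<Omega>. J i j * (1 - u i * u j))"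

text \<open>Energy with h = 0: sum over pairs of lattice points not both outside Gamma.\<close>
definition Hen :: "nat \<Rightarrow> ((nat \<Rightarrow> int) \<Rightarrow> (nat \<Rightarrow> int) \<Rightarrow> real) \<Rightarrow> (nat \<Rightarrow> int) set
    \<Rightarrow> ((nat \<Rightarrow> int) \<Rightarrow> real) \<Rightarrow> real" where
  "Hen d J \<Gamma> u = infsum (\<lambda>(i,j). J i j * (1 - u i * u j))
      ((lat d \<times> lat d) - ((lat d - \<Gamma>) \<times> (lat d - \<Gamma>)))"

definition minimizer :: "nat \<Rightarrow> ((nat \<Rightarrow> int) \<Rightarrow> (nat \<Rightarrow> int) \<Rightarrow> real) \<Rightarrow> (nat \<Rightarrow> int) set
    \<Rightarrow> ((nat \<Rightarrow> int) \<Rightarrow> real) \<Rightarrow> bool" where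
  "minimizer d J \<Gamma> u = (config d u \<and>
     (\<forall>v. config d v \<and> (\<forall>i\<in>lat d - \<Gamma>. v i = u i) \<longrightarrow> Hen d J \<Gamma> u \<le> Hen d J \<Gamma> v))"

definition J_nonneg :: "nat \<Rightarrow> ((nat \<Rightarrow> int) \<Rightarrow> (nat \<Rightarrow> int) \<Rightarrow> real) \<Rightarrow> bool" where
  "J_nonneg d J = (\<forall>i\<in>lat d. \<forall>j\<in>lat d. J i j \<ge> 0)"

definition J1 :: "nat \<Rightarrow> ((nat \<Rightarrow> int) \<Rightarrow> (nat \<Rightarrow> int) \<Rightarrow> real) \<Rightarrow> bool" where
  "J1 d J = (\<forall>i\<in>lat d. \<forall>j\<in>lat d. J i j = J j i)"

definition J2 :: "nat \<Rightarrow> ((nat \<Rightarrow> int) \<Rightarrow> (nat \<Rightarrow> int) \<Rightarrow> real) \<Rightarrow> bool" where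
  "J2 d J = (\<forall>i\<in>lat d. J i i = 0)"

definition J5 :: "nat \<Rightarrow> ((nat \<Rightarrow> int) \<Rightarrow> (nat \<Rightarrow> int) \<Rightarrow> real) \<Rightarrow> bool" where
  "J5 d J = (\<exists>\<tau>::nat. \<tau> \<ge> 1 \<and>
     (\<forall>i\<in>lat d. \<forall>i'\<in>lat d. \<forall>j\<in>lat d. \<forall>j'\<in>lat d.
        i - i' = j - j' \<and> (\<forall>n<d. int \<tau> dvd (i n - i' n)) \<longrightarrow> J i j = J i' j'))"

definition JP :: "nat \<Rightarrow> real \<Rightarrow> real \<Rightarrow> real \<Rightarrow> ((nat \<Rightarrow> int) \<Rightarrow> (nat \<Rightarrow> int) \<Rightarrow> real) \<Rightarrow> bool" where
  "JP d s lam Lam J = (\<forall>i\<in>lat d. \<forall>j\<in>lat d. i \<noteq> j \<longrightarrow>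
     lam * real_of_int (norm1 d (i - j)) powr (- (real d + s)) \<le> J i j \<and>
     J i j \<le> Lam * real_of_int (norm1 d (i - j)) powr (- (real d + s)))"

end

theory Submission
  imports Defs
begin


lemma fun_diff_apply': "(x - y) n = x n - (y n :: int)" for x y :: "nat \<Rightarrow> int"
  by simp

lemma lat_diff: "x \<in> lat d \<Longrightarrow> y \<in> lat d \<Longrightarrow> x - y \<in> lat d"
  by (auto simp: lat_def)

lemma mem_cube: "y \<in> cube d k x \<longleftrightarrow> y \<in> lat d \<and> (\<forall>n<d. \<bar>y n - x n\<bar> \<le> int k)"
  by (simp add: cube_def)

lemma cube_lat: "cube d k x \<subseteq> lat d" by (auto simp: cube_def)

lemma cube_mono: "k \<le> k' \<Longrightarrow> cube d k x \<subseteq> cube d k' x"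
  by (force simp: cube_def)

lemma lat_eqI: "x \<in> lat d \<Longrightarrow> y \<in> lat d \<Longrightarrow> (\<forall>n<d. x n = y n) \<Longrightarrow> x = y"
  by (rule ext, auto simp: lat_def) (metis not_le)

lemma cube0: "x \<in> lat d \<Longrightarrow> cube d 0 x = {x}"
  by (auto simp: cube_def intro: lat_eqI)

lemma center_in_cube: "x \<in> lat d \<Longrightarrow> x \<in> cube d k x"
  by (simp add: cube_def)

lemma cube_bij: "bij_betw (\<lambda>f. restrict f {..<d}) (cube d k x)
   (PiE {..<d} (\<lambda>n. {x n - int k .. x n + int k}))"
proof (rule bij_betwI')
  fix f g assume "f \<in> cube d k x" "g \<in> cube d k x"
  then show "(restrict f {..<d} = restrict g {..<d}) = (f = g)"
    by (auto simp: cube_def restrict_def intro!: lat_eqI) (metis lessThan_iff)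
next
  fix f assume "f \<in> cube d k x"
  then show "restrict f {..<d} \<in> PiE {..<d} (\<lambda>n. {x n - int k .. x n + int k})"
    by (auto simp: cube_def abs_le_iff)
next
  fix g assume g: "g \<in> PiE {..<d} (\<lambda>n. {x n - int k .. x n + int k})"
  define f where "f = (\<lambda>n. if n < d then g n else 0)"
  have "\<bar>g n - x n\<bar> \<le> int k" if "n < d" for n
  proof -
    have "g n \<in> {x n - int k .. x n + int k}" using PiE_mem[OF g] that by simp
    then show ?thesis by auto
  qed
  then have "f \<in> cube d k x" by (auto simp: cube_def lat_def f_def abs_le_iff)
  moreover have "g = restrict f {..<d}" using g by (auto simp: f_def restrict_def PiE_def extensional_def)
  ultimately show "\<exists>f\<in>cube d k x. g = restrict f {..<d}" by blast
qed

lemma cube_card: "card (cube d k x) = (2*k+1)^d"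
proof -
  have "card (cube d k x) = card (PiE {..<d} (\<lambda>n. {x n - int k .. x n + int k}))"
    using bij_betw_same_card[OF cube_bij] .
  also have "\<dots> = (\<Prod>n<d. card {x n - int k .. x n + int k})" by (simp add: card_PiE)
  also have "\<dots> = (2*k+1)^d" by (simp add: nat_add_distrib nat_mult_distrib)
  finally show ?thesis .
qed

lemma cube_finite: "finite (cube d k x)"
proof -
  have "finite (PiE {..<d} (\<lambda>n. {x n - int k .. x n + int k}))" by (simp add: finite_PiE)
  then show ?thesis using bij_betw_finite[OF cube_bij] by blast
qed

lemma norm1_nonneg: "norm1 d x \<ge> 0" by (simp add: norm1_def sum_nonneg)

lemma norm1_sym: "norm1 d (x - y) = norm1 d (y - x)"
  by (simp add: norm1_def abs_minus_commute)

lemma norm1_le_coord: "n < d \<Longrightarrow> \<bar>x n\<bar> \<le> norm1 d x"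
  unfolding norm1_def by (rule member_le_sum) auto

lemma norm1_cube_le: "y \<in> cube d k x \<Longrightarrow> norm1 d (x - y) \<le> int d * int k"
proof -
  assume y: "y \<in> cube d k x"
  have "norm1 d (x - y) = (\<Sum>n<d. \<bar>x n - y n\<bar>)" by (simp add: norm1_def)
  also have "\<dots> \<le> (\<Sum>n<d. int k)" 
    by (rule sum_mono) (use y in \<open>auto simp: cube_def abs_minus_commute\<close>)
  finally show ?thesis by simp
qed

lemma norm1_not_cube: "y \<in> lat d \<Longrightarrow> y \<notin> cube d k x \<Longrightarrow> norm1 d (x - y) \<ge> int k + 1"
proof -
  assume "y \<in> lat d" "y \<notin> cube d k x"
  then obtain n where n: "n < d" "\<bar>y n - x n\<bar> > int k" by (auto simp: cube_def)
  have "\<bar>(x - y) n\<bar> \<le> norm1 d (x - y)" by (rule norm1_le_coord[OF n(1)])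
  then show ?thesis using n by (simp add: abs_minus_commute)
qed

lemma norm1_pos: "x \<in> lat d \<Longrightarrow> y \<in> lat d \<Longrightarrow> x \<noteq> y \<Longrightarrow> norm1 d (x - y) \<ge> 1"
  using norm1_not_cube[of y d 0 x] cube0[of x d] by auto

lemma cube_tri: "x \<in> cube d t q \<Longrightarrow> y \<in> cube d k x \<Longrightarrow> y \<in> cube d (t + k) q"
  by (force simp: cube_def)




lemma powr_ratio_ge:
  fixes x y e :: real
  assumes "0 < x" "x \<le> y" "0 \<le> e"
  shows "(y / x) powr e \<ge> 1 + e * (1 - x / y)"
proof -
  have y: "0 < y" using assms by linarith
  have "ln (x / y) \<le> x / y - 1" using ln_le_minus_one[of "x/y"] assms y by simp
  moreover have "ln (y / x) = - ln (x / y)" using assms y by (simp add: ln_divide_pos)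
  ultimately have l: "ln (y / x) \<ge> 1 - x / y" by linarith
  have "(y / x) powr e = exp (e * ln (y / x))" using assms y by (simp add: powr_def)
  also have "\<dots> \<ge> 1 + e * ln (y / x)" by (rule exp_ge_add_one_self)
  finally have "(y / x) powr e \<ge> 1 + e * ln (y / x)" .
  moreover have "e * ln (y / x) \<ge> e * (1 - x / y)" using l assms(3) by (rule mult_left_mono)
  ultimately show ?thesis by linarith
qed

lemma telescope1:
  fixes k s :: real
  assumes "1 \<le> k" "0 < s"
  shows "(k+1) powr (-1-s) \<le> (k powr (-s) - (k+1) powr (-s)) / s"
proof -
  define b where "b = k + 1"
  have k0: "0 < k" and b0: "0 < b" using assms by (auto simp: b_def)
  have r: "(b / k) powr s \<ge> 1 + s * (1 - k / b)"
    by (rule powr_ratio_ge) (use assms in \<open>auto simp: b_def\<close>)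
  have "1 - k / b = 1 / b" using b0 by (simp add: b_def field_simps)
  then have r': "(b / k) powr s \<ge> 1 + s / b" using r by simp
  have e1: "k powr (-s) = b powr (-s) * (b / k) powr s"
    using k0 b0 by (simp add: powr_divide powr_minus field_simps)
  have e2a': "b powr (-s + -1) = b powr (-s) * b powr (-1)" by (rule powr_add)
  have e2a: "b powr (-1-s) = b powr (-s) * b powr (-1)"
    using e2a' by (simp add: add.commute)
  have e2b: "b powr (-1) = inverse b" using b0 by (simp add: powr_minus)
  have e2: "b powr (-1-s) = b powr (-s) / b"
    using e2a e2b by (simp add: divide_inverse)
  have bp: "0 < b powr (-s)" using b0 by simp
  have "b powr (-s) * (s / b) \<le> b powr (-s) * ((b / k) powr s - 1)"
    using r' bp by (intro mult_left_mono) auto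
  then have "s * (b powr (-s) / b) \<le> k powr (-s) - b powr (-s)"
    using e1 by (simp add: algebra_simps)
  then have "b powr (-s) / b \<le> (k powr (-s) - b powr (-s)) / s"
    using assms by (simp add: field_simps)
  then show ?thesis using e2 by (simp add: b_def)
qed

lemma telescope2:
  fixes m s :: real
  assumes "1 \<le> m" "0 < s" "s < 1"
  shows "m powr (-s) \<le> 2 / (1 - s) * (m powr (1 - s) - (m - 1) powr (1 - s))"
proof (cases "m = 1")
  case True
  then show ?thesis using assms by (simp add: field_simps)
next
  case False
  define x where "x = m - 1"
  define a where "a = 1 - s"
  have x0: "0 < x" using False assms by (simp add: x_def)
  have a0: "0 < a" "a < 1" using assms by (auto simp: a_def)
  have m0: "0 < m" using assms by simp
  have r: "(m / x) powr a \<ge> 1 + a * (1 - x / m)"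
    by (rule powr_ratio_ge) (use x0 a0 in \<open>auto simp: x_def\<close>)
  have "1 - x / m = 1 / m" using m0 by (simp add: x_def field_simps)
  then have r': "(m / x) powr a \<ge> 1 + a / m" using r by simp
  have mx: "0 < (m / x) powr a" using x0 m0 by simp
  have ex: "x powr a = m powr a / (m / x) powr a"
    using x0 m0 by (simp add: powr_divide)
  have ma: "0 < m powr a" using m0 by simp
  have p1: "0 < 1 + a / m" using a0 m0 by (smt (verit) divide_pos_pos)
  have pos: "0 < (m / x) powr a * (1 + a / m)" using mx p1 by (rule mult_pos_pos)
  have "x powr a \<le> m powr a / (1 + a / m)"
    unfolding ex using divide_left_mono[OF r' _ pos] ma by simp
  also have "\<dots> = m powr a * m / (m + a)" using m0 a0 by (simp add: field_simps)
  finally have "m powr a - x powr a \<ge> m powr a - m powr a * m / (m + a)" by linarith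
  also have "m powr a - m powr a * m / (m + a) = m powr a * a / (m + a)"
    using m0 a0 by (simp add: field_simps)
  also have "m powr a * a / (m + a) \<ge> m powr a * a / (2 * m)"
    using m0 a0 ma assms(1) by (intro divide_left_mono) (auto intro: mult_pos_pos)
  finally have h: "m powr a - x powr a \<ge> a / 2 * (m powr a / m)" by (simp add: field_simps)
  have "m powr (1 + -s) = m powr 1 * m powr (-s)" by (rule powr_add)
  then have "m powr a = m * m powr (-s)" using m0 by (simp add: a_def)
  then have "m powr a / m = m powr (-s)"
    using m0 by simp
  then have "m powr (-s) \<le> 2 / a * (m powr a - x powr a)"
    using h a0 by (simp add: field_simps)
  then show ?thesis by (simp add: a_def x_def)
qed

lemma sum_tel1:
  fixes s :: real
  assumes "1 \<le> m" "m \<le> K" "0 < s"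
  shows "(\<Sum>k\<in>{m..K}. real k powr (-1-s)) \<le> real m powr (-1-s) + (real m powr (-s) - real K powr (-s)) / s"
  using assms(2)
proof (induction K rule: dec_induct)
  case base
  then show ?case by simp
next
  case (step K)
  have "{m..Suc K} = insert (Suc K) {m..K}" using step by auto
  then have "(\<Sum>k\<in>{m..Suc K}. real k powr (-1-s)) = real (Suc K) powr (-1-s) + (\<Sum>k\<in>{m..K}. real k powr (-1-s))"
    by simp
  moreover have "real (Suc K) powr (-1-s) \<le> (real K powr (-s) - real (Suc K) powr (-s)) / s"
    using telescope1[of "real K" s] step assms by (simp add: add.commute)
  moreover have "(real K powr (-s) - real (Suc K) powr (-s)) / s + (real m powr (-s) - real K powr (-s)) / s
     = (real m powr (-s) - real (Suc K) powr (-s)) / s" by (simp add: diff_divide_distrib)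
  ultimately show ?case using step.IH by linarith
qed

lemma sum_tel1':
  fixes s :: real
  assumes "1 \<le> m" "0 < s"
  shows "(\<Sum>k\<in>{m..K}. real k powr (-1-s)) \<le> (1 + 1/s) * real m powr (-s)"
proof (cases "m \<le> K")
  case True
  have a: "real m powr (-1-s) \<le> real m powr (-s)"
    using assms by (intro powr_mono) auto
  have b: "real K powr (-s) \<ge> 0" by simp
  have "(\<Sum>k\<in>{m..K}. real k powr (-1-s)) \<le> real m powr (-1-s) + (real m powr (-s) - real K powr (-s)) / s"
    by (rule sum_tel1) (use True assms in auto)
  also have "\<dots> \<le> real m powr (-s) + real m powr (-s) / s"
  proof -
    have "(real m powr (-s) - real K powr (-s)) / s \<le> real m powr (-s) / s"
      using b assms by (intro divide_right_mono) auto
    then show ?thesis using a by linarith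
  qed
  finally show ?thesis by (simp add: field_simps)
next
  case False
  then show ?thesis using assms by simp
qed

lemma sum_tel2:
  fixes s :: real
  assumes "0 < s" "s < 1"
  shows "(\<Sum>m\<in>{1..N}. real m powr (-s)) \<le> 2 / (1 - s) * real N powr (1 - s)"
proof (induction N)
  case 0
  then show ?case by simp
next
  case (Suc N)
  have "(\<Sum>m\<in>{1..Suc N}. real m powr (-s)) = real (Suc N) powr (-s) + (\<Sum>m\<in>{1..N}. real m powr (-s))"
    by (simp add: add.commute)
  moreover have "real (Suc N) powr (-s) \<le> 2 / (1 - s) * (real (Suc N) powr (1 - s) - (real (Suc N) - 1) powr (1 - s))"
    by (rule telescope2) (use assms in auto)
  moreover have "2 / (1 - s) * (real (Suc N) powr (1 - s) - (real (Suc N) - 1) powr (1 - s))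
     + 2 / (1 - s) * real N powr (1 - s) = 2 / (1 - s) * real (Suc N) powr (1 - s)"
    by (simp add: algebra_simps)
  ultimately show ?case using Suc.IH by linarith
qed

lemma pow_diff_le:
  fixes a b :: real
  assumes "0 \<le> b" "b \<le> a"
  shows "a^n - b^n \<le> real n * (a - b) * a^(n-1)"
proof (induction n)
  case 0
  then show ?case by simp
next
  case (Suc n)
  have "a^Suc n - b^Suc n = a * (a^n - b^n) + (a - b) * b^n" by (simp add: algebra_simps)
  also have "\<dots> \<le> a * (real n * (a - b) * a^(n-1)) + (a - b) * a^n"
    using Suc.IH assms by (intro add_mono mult_left_mono mult_right_mono power_mono) auto
  also have "\<dots> = real (Suc n) * (a - b) * a^n"
  proof (cases n)
    case 0 then show ?thesis by simp
  next
    case (Suc n') then show ?thesis by (simp add: algebra_simps)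
  qed
  finally show ?case by simp
qed




definition wp :: "nat \<Rightarrow> real \<Rightarrow> (nat \<Rightarrow> int) \<Rightarrow> (nat \<Rightarrow> int) \<Rightarrow> real" where
  "wp d s x y = real_of_int (norm1 d (x - y)) powr (-(real d + s))"

definition CT :: "nat \<Rightarrow> real \<Rightarrow> real" where
  "CT d s = 2 * real d * 3^(d-1) * (1 + 1/s)"

lemma wp_nonneg: "wp d s x y \<ge> 0" by (simp add: wp_def)

lemma wp_self: "wp d s x x = 0" by (simp add: wp_def norm1_def)

lemma wp_sym: "wp d s x y = wp d s y x" by (simp add: wp_def norm1_sym)

lemma shell_sum:
  assumes x: "x \<in> lat d" and m: "1 \<le> m" and s: "0 \<le> s"
  shows "(\<Sum>y\<in>cube d K x - cube d (m-1) x. wp d s x y)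
     \<le> (\<Sum>k\<in>{m..K}. (real ((2*k+1)^d) - real ((2*k-1)^d)) * real k powr (-(real d + s)))"
proof (induction K)
  case 0
  have e: "cube d 0 x - cube d (m-1) x = {}"
    by (rule Diff_eq_empty_iff[THEN iffD2], rule cube_mono) simp
  have e2: "{m..0} = {}" using m by auto
  show ?case unfolding e e2 by simp
next
  case (Suc K)
  show ?case
  proof (cases "Suc K \<le> m - 1")
    case True
    have e: "cube d (Suc K) x - cube d (m-1) x = {}" using cube_mono[OF True, of d x] by auto
    have e2: "{m..Suc K} = {}" using m True by auto
    show ?thesis unfolding e e2 by simp
  next
    case False
    then have Km: "m - 1 \<le> K" "m \<le> Suc K" by auto
    define S where "S = cube d (Suc K) x - cube d K x"
    have split: "cube d (Suc K) x - cube d (m-1) x = (cube d K x - cube d (m-1) x) \<union> S"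
      using cube_mono[of K "Suc K" d x] cube_mono[OF Km(1), of d x] by (auto simp: S_def)
    have disj: "(cube d K x - cube d (m-1) x) \<inter> S = {}" by (auto simp: S_def)
    have finS: "finite S" by (simp add: S_def cube_finite)
    have "(\<Sum>y\<in>cube d (Suc K) x - cube d (m-1) x. wp d s x y)
        = (\<Sum>y\<in>cube d K x - cube d (m-1) x. wp d s x y) + (\<Sum>y\<in>S. wp d s x y)"
      unfolding split by (rule sum.union_disjoint) (use finS disj cube_finite in auto)
    moreover have "(\<Sum>y\<in>S. wp d s x y) \<le> real (card S) * real (Suc K) powr (-(real d + s))"
    proof -
      have "wp d s x y \<le> real (Suc K) powr (-(real d + s))" if "y \<in> S" for y
      proof -
        have "y \<in> lat d" "y \<notin> cube d K x" using that cube_lat by (auto simp: S_def)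
        then have "norm1 d (x - y) \<ge> int K + 1" by (rule norm1_not_cube)
        then have "real (Suc K) \<le> real_of_int (norm1 d (x - y))" by simp
        then show ?thesis unfolding wp_def
          using s by (intro powr_mono2') (auto intro: add_nonneg_nonneg)
      qed
      then show ?thesis using sum_bounded_above[of S "wp d s x"] by simp
    qed
    moreover have "real (card S) = real ((2*Suc K+1)^d) - real ((2*Suc K-1)^d)"
    proof -
      have "card S = card (cube d (Suc K) x) - card (cube d K x)"
        unfolding S_def by (rule card_Diff_subset) (auto simp: cube_finite cube_mono)
      moreover have "card (cube d K x) \<le> card (cube d (Suc K) x)"
        by (rule card_mono) (auto simp: cube_finite cube_mono)
      ultimately have "real (card S) = real (card (cube d (Suc K) x)) - real (card (cube d K x))"
        by simp
      then show ?thesis by (simp add: cube_card)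
    qed
    moreover have "{m..Suc K} = insert (Suc K) {m..K}" using Km by auto
    ultimately show ?thesis using Suc.IH by (simp add: add.commute)
  qed
qed

lemma shell_count:
  assumes "1 \<le> k" "1 \<le> d"
  shows "real ((2*k+1)^d) - real ((2*k-1)^d) \<le> 2 * real d * 3^(d-1) * real k ^ (d-1)"
proof -
  have b: "real (2*k-1) = 2 * real k - 1" using assms by (simp add: of_nat_diff)
  have "real ((2*k+1)^d) - real ((2*k-1)^d) = (2 * real k + 1)^d - (2 * real k - 1)^d"
    using b by (simp add: add.commute)
  also have "\<dots> \<le> real d * ((2 * real k + 1) - (2 * real k - 1)) * (2 * real k + 1)^(d-1)"
    by (rule pow_diff_le) (use assms in auto)
  also have "\<dots> = 2 * real d * (2 * real k + 1)^(d-1)" by simp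
  also have "\<dots> \<le> 2 * real d * (3 * real k)^(d-1)"
    using assms by (intro mult_left_mono power_mono) auto
  also have "\<dots> = 2 * real d * 3^(d-1) * real k ^ (d-1)" by (simp add: power_mult_distrib)
  finally show ?thesis .
qed

lemma shell_term:
  assumes "1 \<le> k" "1 \<le> d"
  shows "(real ((2*k+1)^d) - real ((2*k-1)^d)) * real k powr (-(real d + s))
     \<le> 2 * real d * 3^(d-1) * real k powr (-1-s)"
proof -
  have k0: "0 < real k" using assms by simp
  have "(real ((2*k+1)^d) - real ((2*k-1)^d)) * real k powr (-(real d + s))
      \<le> (2 * real d * 3^(d-1) * real k ^ (d-1)) * real k powr (-(real d + s))"
    using shell_count[OF assms] by (intro mult_right_mono) auto
  also have "real k ^ (d-1) = real k powr (real d - 1)"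
    using k0 assms by (simp add: powr_realpow[symmetric] of_nat_diff)
  finally have h: "(real ((2*k+1)^d) - real ((2*k-1)^d)) * real k powr (-(real d + s))
      \<le> 2 * real d * 3^(d-1) * (real k powr (real d - 1) * real k powr (-(real d + s)))"
    by (simp add: mult.assoc)
  have "real k powr (real d - 1 + (-(real d + s))) = real k powr (real d - 1) * real k powr (-(real d + s))"
    by (rule powr_add)
  moreover have "real d - 1 + (-(real d + s)) = -1-s" by simp
  ultimately have "real k powr (real d - 1) * real k powr (-(real d + s)) = real k powr (-1-s)" by simp
  then show ?thesis using h by simp
qed

lemma tail_cube:
  assumes x: "x \<in> lat d" and m: "1 \<le> m" and d: "1 \<le> d" and s: "0 < s"
  shows "(\<Sum>y\<in>cube d K x - cube d (m-1) x. wp d s x y) \<le> CT d s * real m powr (-s)"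
proof -
  have "(\<Sum>y\<in>cube d K x - cube d (m-1) x. wp d s x y)
     \<le> (\<Sum>k\<in>{m..K}. (real ((2*k+1)^d) - real ((2*k-1)^d)) * real k powr (-(real d + s)))"
    by (rule shell_sum[OF x m less_imp_le[OF s]])
  also have "\<dots> \<le> (\<Sum>k\<in>{m..K}. 2 * real d * 3^(d-1) * real k powr (-1-s))"
    by (rule sum_mono, rule shell_term) (use m d in auto)
  also have "\<dots> = 2 * real d * 3^(d-1) * (\<Sum>k\<in>{m..K}. real k powr (-1-s))"
    by (simp add: sum_distrib_left)
  also have "\<dots> \<le> 2 * real d * 3^(d-1) * ((1 + 1/s) * real m powr (-s))"
    by (intro mult_left_mono sum_tel1') (use m s in auto)
  finally show ?thesis by (simp add: CT_def mult.assoc)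
qed

lemma tail_sum:
  assumes x: "x \<in> lat d" and m: "1 \<le> m" and d: "1 \<le> d" and s: "0 < s"
    and G: "finite G" "G \<subseteq> lat d - cube d (m-1) x"
  shows "(\<Sum>y\<in>G. wp d s x y) \<le> CT d s * real m powr (-s)"
proof -
  define K where "K = (\<Sum>y\<in>G. nat (norm1 d (y - x)))"
  have "G \<subseteq> cube d K x - cube d (m-1) x"
  proof
    fix y assume y: "y \<in> G"
    have "nat (norm1 d (y - x)) \<le> K" unfolding K_def
      by (rule member_le_sum) (use y G in auto)
    then have "\<bar>y n - x n\<bar> \<le> int K" if "n < d" for n
      using norm1_le_coord[OF that, of "y - x"] norm1_nonneg[of d "y - x"] by simp
    then show "y \<in> cube d K x - cube d (m-1) x" using y G by (auto simp: cube_def)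
  qed
  then have "(\<Sum>y\<in>G. wp d s x y) \<le> (\<Sum>y\<in>cube d K x - cube d (m-1) x. wp d s x y)"
    by (intro sum_mono2) (auto simp: cube_finite wp_nonneg)
  also have "\<dots> \<le> CT d s * real m powr (-s)" by (rule tail_cube[OF x m d s])
  finally show ?thesis .
qed

lemma row_sum:
  assumes x: "x \<in> lat d" and d: "1 \<le> d" and s: "0 < s"
    and G: "finite G" "G \<subseteq> lat d"
  shows "(\<Sum>y\<in>G. wp d s x y) \<le> CT d s"
proof -
  have "(\<Sum>y\<in>G. wp d s x y) = (\<Sum>y\<in>G - {x}. wp d s x y)"
    by (rule sum.mono_neutral_right) (use G in \<open>auto simp: wp_self\<close>)
  also have "\<dots> \<le> CT d s * real (1::nat) powr (-s)"
    by (rule tail_sum) (use x d s G cube0[OF x] in auto)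
  finally show ?thesis by simp
qed

lemma J_le_wp:
  assumes "J2 d J" "JP d s lam Lam J" "x \<in> lat d" "y \<in> lat d" "0 \<le> Lam"
  shows "J x y \<le> Lam * wp d s x y"
  using assms by (cases "x = y") (auto simp: J2_def JP_def wp_def)




lemma infsum_diff':
  fixes f g :: "'a \<Rightarrow> real"
  assumes "f summable_on A" "g summable_on A"
  shows "infsum (\<lambda>x. f x - g x) A = infsum f A - infsum g A"
proof -
  have "(\<lambda>x. - g x) summable_on A" using assms(2) by (simp add: summable_on_uminus)
  then have "infsum (\<lambda>x. f x + - g x) A = infsum f A + infsum (\<lambda>x. - g x) A"
    by (rule infsum_add[OF assms(1)])
  then show ?thesis by (simp add: infsum_uminus)
qed

locale setting =
  fixes d :: nat and s lam Lam :: real and J :: "(nat \<Rightarrow> int) \<Rightarrow> (nat \<Rightarrow> int) \<Rightarrow> real"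
  assumes d2: "2 \<le> d" and s0: "0 < s" and s1: "s < 1" and lam0: "0 < lam" and lamLam: "lam \<le> Lam"
    and Jn: "J_nonneg d J" and JJ1: "J1 d J" and JJ2: "J2 d J" and JJP: "JP d s lam Lam J"
begin

lemma d1: "1 \<le> d" using d2 by simp
lemma Lam0: "0 \<le> Lam" using lam0 lamLam by simp

lemma J0: "x \<in> lat d \<Longrightarrow> y \<in> lat d \<Longrightarrow> 0 \<le> J x y"
  using Jn by (simp add: J_nonneg_def)

lemma Jsym: "x \<in> lat d \<Longrightarrow> y \<in> lat d \<Longrightarrow> J x y = J y x"
  using JJ1 by (simp add: J1_def)

lemma Jup: "x \<in> lat d \<Longrightarrow> y \<in> lat d \<Longrightarrow> J x y \<le> Lam * wp d s x y"
  by (rule J_le_wp[OF JJ2 JJP _ _ Lam0])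

lemma Jlow: "x \<in> lat d \<Longrightarrow> y \<in> lat d \<Longrightarrow> x \<noteq> y \<Longrightarrow>
    lam * real_of_int (norm1 d (x - y)) powr (-(real d + s)) \<le> J x y"
  using JJP by (simp add: JP_def)

lemma row_J: "x \<in> lat d \<Longrightarrow> finite G \<Longrightarrow> G \<subseteq> lat d \<Longrightarrow> (\<Sum>y\<in>G. J x y) \<le> Lam * CT d s"
proof -
  assume x: "x \<in> lat d" and G: "finite G" "G \<subseteq> lat d"
  have "(\<Sum>y\<in>G. J x y) \<le> (\<Sum>y\<in>G. Lam * wp d s x y)"
    by (rule sum_mono, rule Jup) (use x G in auto)
  also have "\<dots> = Lam * (\<Sum>y\<in>G. wp d s x y)" by (simp add: sum_distrib_left)
  also have "\<dots> \<le> Lam * CT d s"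
    by (intro mult_left_mono row_sum Lam0) (use x G d1 s0 in auto)
  finally show ?thesis .
qed

lemma tail_J: "x \<in> lat d \<Longrightarrow> 1 \<le> m \<Longrightarrow> finite G \<Longrightarrow> G \<subseteq> lat d - cube d (m-1) x \<Longrightarrow>
   (\<Sum>y\<in>G. J x y) \<le> Lam * CT d s * real m powr (-s)"
proof -
  assume x: "x \<in> lat d" and m: "1 \<le> m" and G: "finite G" "G \<subseteq> lat d - cube d (m-1) x"
  have "(\<Sum>y\<in>G. J x y) \<le> (\<Sum>y\<in>G. Lam * wp d s x y)"
    by (rule sum_mono, rule Jup) (use x G in auto)
  also have "\<dots> = Lam * (\<Sum>y\<in>G. wp d s x y)" by (simp add: sum_distrib_left)
  also have "\<dots> \<le> Lam * (CT d s * real m powr (-s))"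
    by (rule mult_left_mono[OF tail_sum Lam0]) (use x m G d1 s0 in auto)
  finally show ?thesis by (simp add: mult.assoc)
qed

lemma pairs_sum_left:
  assumes A: "finite A" "A \<subseteq> lat d" and G: "finite G" "G \<subseteq> A \<times> lat d"
  shows "(\<Sum>(i,j)\<in>G. J i j) \<le> real (card A) * (Lam * CT d s)"
proof -
  define B where "B x = {y. (x, y) \<in> G}" for x
  have GS: "G = Sigma A B" using G by (auto simp: B_def)
  have finB: "finite (B x)" for x
  proof -
    have "B x \<subseteq> snd ` G" by (force simp: B_def)
    then show ?thesis using G finite_subset by blast
  qed
  have "(\<Sum>(i,j)\<in>G. J i j) = (\<Sum>x\<in>A. \<Sum>y\<in>B x. J x y)"
    unfolding GS by (rule sum.Sigma[symmetric]) (use A finB in auto)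
  also have "\<dots> \<le> (\<Sum>x\<in>A. Lam * CT d s)"
    by (rule sum_mono, rule row_J) (use A G finB in \<open>auto simp: B_def\<close>)
  finally show ?thesis by simp
qed

lemma pairs_sum_right:
  assumes A: "finite A" "A \<subseteq> lat d" and G: "finite G" "G \<subseteq> lat d \<times> A"
  shows "(\<Sum>(i,j)\<in>G. J i j) \<le> real (card A) * (Lam * CT d s)"
proof -
  have inj: "inj_on prod.swap G" by (auto simp: inj_on_def)
  have "(\<Sum>(i,j)\<in>prod.swap ` G. J i j) = (\<Sum>p\<in>G. J (snd p) (fst p))"
    by (simp add: sum.reindex[OF inj] case_prod_beta)
  also have "\<dots> = (\<Sum>p\<in>G. J (fst p) (snd p))"
  proof (rule sum.cong)
    fix p assume "p \<in> G"
    then have "fst p \<in> lat d" "snd p \<in> lat d" using G A by (auto dest!: subsetD[OF G(2)])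
    then show "J (snd p) (fst p) = J (fst p) (snd p)" by (simp add: Jsym)
  qed simp
  finally have e: "(\<Sum>(i,j)\<in>G. J i j) = (\<Sum>(i,j)\<in>prod.swap ` G. J i j)" by (simp add: case_prod_beta)
  have "(\<Sum>(i,j)\<in>G. J i j) = (\<Sum>(i,j)\<in>prod.swap ` G. J i j)" by (rule e)
  also have "\<dots> \<le> real (card A) * (Lam * CT d s)"
    by (rule pairs_sum_left[OF A]) (use A G in auto)
  finally show ?thesis .
qed

lemma summable_left:
  assumes A: "finite A" "A \<subseteq> lat d" and P: "P \<subseteq> A \<times> lat d"
  shows "(\<lambda>(i,j). J i j) summable_on P"
proof (rule nonneg_bdd_above_summable_on)
  show "0 \<le> (case x of (i, j) \<Rightarrow> J i j)" if "x \<in> P" for x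
  proof -
    obtain i j where x: "x = (i, j)" by (cases x)
    have "i \<in> lat d" "j \<in> lat d" using that P A x by auto
    then show ?thesis using x J0 by simp
  qed
  show "bdd_above (sum (\<lambda>(i, j). J i j) ` {F. F \<subseteq> P \<and> finite F})"
  proof (rule bdd_aboveI[where M="real (card A) * (Lam * CT d s)"])
    fix y assume "y \<in> sum (\<lambda>(i, j). J i j) ` {F. F \<subseteq> P \<and> finite F}"
    then obtain F where F: "F \<subseteq> P" "finite F" "y = sum (\<lambda>(i, j). J i j) F" by blast
    show "y \<le> real (card A) * (Lam * CT d s)"
      unfolding F(3) by (rule pairs_sum_left[OF A F(2)]) (use F(1) P in blast)
  qed
qed

lemma summable_right:
  assumes A: "finite A" "A \<subseteq> lat d" and P: "P \<subseteq> lat d \<times> A"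
  shows "(\<lambda>(i,j). J i j) summable_on P"
proof (rule nonneg_bdd_above_summable_on)
  show "0 \<le> (case x of (i, j) \<Rightarrow> J i j)" if "x \<in> P" for x
  proof -
    obtain i j where x: "x = (i, j)" by (cases x)
    have "i \<in> lat d" "j \<in> lat d" using that P A x by auto
    then show ?thesis using x J0 by simp
  qed
  show "bdd_above (sum (\<lambda>(i, j). J i j) ` {F. F \<subseteq> P \<and> finite F})"
  proof (rule bdd_aboveI[where M="real (card A) * (Lam * CT d s)"])
    fix y assume "y \<in> sum (\<lambda>(i, j). J i j) ` {F. F \<subseteq> P \<and> finite F}"
    then obtain F where F: "F \<subseteq> P" "finite F" "y = sum (\<lambda>(i, j). J i j) F" by blast
    show "y \<le> real (card A) * (Lam * CT d s)"
      unfolding F(3) by (rule pairs_sum_right[OF A F(2)]) (use F(1) P in blast)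
  qed
qed

lemma summable_dom:
  assumes A: "finite A" "A \<subseteq> lat d" and P: "P \<subseteq> A \<times> lat d \<union> lat d \<times> A"
  shows "(\<lambda>(i,j). J i j) summable_on P"
proof -
  have "(\<lambda>(i,j). J i j) summable_on (A \<times> lat d \<union> lat d \<times> A)"
    by (rule summable_on_union[OF summable_left[OF A] summable_right[OF A]]) auto
  then show ?thesis by (rule summable_on_subset[OF _ P])
qed

lemma summable_cmp:
  fixes g :: "((nat \<Rightarrow> int) \<times> (nat \<Rightarrow> int)) \<Rightarrow> real"
  assumes A: "finite A" "A \<subseteq> lat d" and P: "P \<subseteq> A \<times> lat d \<union> lat d \<times> A"
    and g: "\<And>i j. (i,j) \<in> P \<Longrightarrow> \<bar>g (i,j)\<bar> \<le> c * J i j"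
  shows "g summable_on P"
proof -
  have c: "(\<lambda>p. c * (case p of (i,j) \<Rightarrow> J i j)) summable_on P"
    by (rule summable_on_cmult_right[OF summable_dom[OF A P]])
  have "(\<lambda>p. norm (g p)) summable_on P"
  proof (rule summable_on_comparison_test[OF c])
    fix p assume p: "p \<in> P"
    obtain i j where pij: "p = (i, j)" by (cases p)
    show "norm (g p) \<le> c * (case p of (i,j) \<Rightarrow> J i j)" using g[of i j] p pij by simp
    show "0 \<le> norm (g p)" by simp
  qed
  then show ?thesis by (rule abs_summable_summable)
qed

end



lemma config_lat: "config d u \<Longrightarrow> i \<in> lat d \<Longrightarrow> u i = 1 \<or> u i = -1"
  by (auto simp: config_def)

lemma config_prod: "config d u \<Longrightarrow> i \<in> lat d \<Longrightarrow> j \<in> lat d \<Longrightarrow> \<bar>u i * u j\<bar> = 1"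
  using config_lat[of d u i] config_lat[of d u j] by auto

context setting begin

lemma summable_sq:
  assumes A: "finite A" "A \<subseteq> lat d" and P: "P \<subseteq> A \<times> lat d \<union> lat d \<times> A"
    and cu: "config d u"
  shows "(\<lambda>(i,j). J i j * (1 - u i * u j)) summable_on P"
proof (rule summable_cmp[OF A P, where c=2])
  fix i j assume ij: "(i, j) \<in> P"
  then have l: "i \<in> lat d" "j \<in> lat d" using P A by auto
  have "\<bar>1 - u i * u j\<bar> \<le> 2" using config_lat[OF cu l(1)] config_lat[OF cu l(2)] by auto
  then have "J i j * \<bar>1 - u i * u j\<bar> \<le> J i j * 2" using J0[OF l] by (rule mult_left_mono)
  then have "\<bar>J i j\<bar> * \<bar>1 - u i * u j\<bar> \<le> J i j * 2" using J0[OF l] by simp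
  then show "\<bar>(case (i, j) of (i, j) \<Rightarrow> J i j * (1 - u i * u j))\<bar> \<le> 2 * J i j"
    by (simp add: abs_mult mult.commute)
qed

lemma summable_uu:
  assumes A: "finite A" "A \<subseteq> lat d" and P: "P \<subseteq> A \<times> lat d \<union> lat d \<times> A"
    and cu: "config d u" and c: "0 \<le> c"
  shows "(\<lambda>(i,j). c * (J i j * u i * u j)) summable_on P"
proof (rule summable_cmp[OF A P, where c=c])
  fix i j assume ij: "(i, j) \<in> P"
  then have l: "i \<in> lat d" "j \<in> lat d" using P A by auto
  have "\<bar>c * (J i j * u i * u j)\<bar> = c * J i j * \<bar>u i * u j\<bar>" using J0[OF l] c
    by (simp add: abs_mult mult.assoc)
  also have "\<dots> = c * J i j" using config_prod[OF cu l] by simp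
  finally show "\<bar>(case (i, j) of (i, j) \<Rightarrow> c * (J i j * u i * u j))\<bar> \<le> c * J i j" by simp
qed

lemma flip:
  assumes mn: "minimizer d J \<Gamma> u" and \<Gamma>: "finite \<Gamma>" "\<Gamma> \<subseteq> lat d" and A: "A \<subseteq> \<Gamma>"
  shows "0 \<le> infsum (\<lambda>(i,j). J i j * u i * u j) (A \<times> (lat d - A))"
proof -
  have cu: "config d u" using mn by (simp add: minimizer_def)
  define v where "v = (\<lambda>i. if i \<in> A then - u i else u i)"
  have cv: "config d v" using cu by (auto simp: config_def v_def)
  have agree: "\<forall>i\<in>lat d - \<Gamma>. v i = u i" using A by (auto simp: v_def)
  have HH: "Hen d J \<Gamma> u \<le> Hen d J \<Gamma> v" using mn cv agree by (simp add: minimizer_def)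
  define D where "D = lat d \<times> lat d - (lat d - \<Gamma>) \<times> (lat d - \<Gamma>)"
  define f where "f w = (\<lambda>(i,j). J i j * (1 - w i * w j))" for w :: "(nat \<Rightarrow> int) \<Rightarrow> real"
  have HD: "Hen d J \<Gamma> w = infsum (f w) D" for w by (simp add: Hen_def D_def f_def)
  have Dsub: "D \<subseteq> \<Gamma> \<times> lat d \<union> lat d \<times> \<Gamma>" by (auto simp: D_def)
  have sfu: "f u summable_on D" unfolding f_def by (rule summable_sq[OF \<Gamma> Dsub cu])
  have sfv: "f v summable_on D" unfolding f_def by (rule summable_sq[OF \<Gamma> Dsub cv])
  define g where "g = (\<lambda>(i,j). if (i \<in> A) \<noteq> (j \<in> A) then 2 * (J i j * u i * u j) else 0)"
  have "Hen d J \<Gamma> v - Hen d J \<Gamma> u = infsum (\<lambda>p. f v p - f u p) D"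
    unfolding HD by (rule infsum_diff'[OF sfv sfu, symmetric])
  also have "\<dots> = infsum g D"
  proof (rule infsum_cong)
    fix p assume "p \<in> D"
    obtain i j where p: "p = (i, j)" by (cases p)
    show "f v p - f u p = g p"
      unfolding p f_def g_def v_def by (auto simp: algebra_simps)
  qed
  also have "\<dots> = infsum g (A \<times> (lat d - A) \<union> (lat d - A) \<times> A)"
  proof (rule infsum_cong_neutral)
    fix p assume p: "p \<in> D - (A \<times> (lat d - A) \<union> (lat d - A) \<times> A)"
    obtain i j where pij: "p = (i, j)" by (cases p)
    have "i \<in> lat d" "j \<in> lat d" using p pij by (auto simp: D_def)
    then have "(i \<in> A) = (j \<in> A)" using p pij by auto
    then show "g p = 0" using pij by (simp add: g_def)
  next
    fix p assume "p \<in> (A \<times> (lat d - A) \<union> (lat d - A) \<times> A) - D"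
    then show "g p = 0" using A \<Gamma> by (auto simp: D_def)
  qed simp
  also have "\<dots> = infsum g (A \<times> (lat d - A)) + infsum g ((lat d - A) \<times> A)"
  proof (rule infsum_Un_disjoint)
    have "g summable_on (A \<times> (lat d - A))"
    proof -
      have "(\<lambda>(i,j). 2 * (J i j * u i * u j)) summable_on (A \<times> (lat d - A))"
        by (rule summable_uu[OF \<Gamma> _ cu]) (use A in auto)
      then show ?thesis by (rule summable_on_cong[THEN iffD1, rotated]) (auto simp: g_def)
    qed
    then show "g summable_on (A \<times> (lat d - A))" .
    have "(\<lambda>(i,j). 2 * (J i j * u i * u j)) summable_on ((lat d - A) \<times> A)"
      by (rule summable_uu[OF \<Gamma> _ cu]) (use A in auto)
    then show "g summable_on ((lat d - A) \<times> A)"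
      by (rule summable_on_cong[THEN iffD1, rotated]) (auto simp: g_def)
  qed auto
  also have "infsum g ((lat d - A) \<times> A) = infsum g (A \<times> (lat d - A))"
  proof -
    have bij: "bij_betw prod.swap (A \<times> (lat d - A)) ((lat d - A) \<times> A)"
      unfolding bij_betw_def by (auto simp: inj_on_def product_swap)
    have "infsum (\<lambda>x. g (prod.swap x)) (A \<times> (lat d - A)) = infsum g ((lat d - A) \<times> A)"
      by (rule infsum_reindex_bij_betw[OF bij])
    moreover have "infsum (\<lambda>x. g (prod.swap x)) (A \<times> (lat d - A)) = infsum g (A \<times> (lat d - A))"
    proof (rule infsum_cong)
      fix p assume p: "p \<in> A \<times> (lat d - A)"
      obtain i j where pij: "p = (i, j)" by (cases p)
      have "i \<in> lat d" "j \<in> lat d" using p pij A \<Gamma> by auto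
      then show "g (prod.swap p) = g p" using p pij by (auto simp: g_def Jsym)
    qed
    ultimately show ?thesis by simp
  qed
  also have "infsum g (A \<times> (lat d - A)) = infsum (\<lambda>(i,j). 2 * (J i j * u i * u j)) (A \<times> (lat d - A))"
    by (rule infsum_cong) (auto simp: g_def)
  also have "\<dots> = 2 * infsum (\<lambda>(i,j). J i j * u i * u j) (A \<times> (lat d - A))"
  proof -
    have "infsum (\<lambda>p. 2 * (\<lambda>(i,j). J i j * u i * u j) p) (A \<times> (lat d - A))
        = 2 * infsum (\<lambda>(i,j). J i j * u i * u j) (A \<times> (lat d - A))"
    proof (rule infsum_cmult_right)
      have sub: "A \<times> (lat d - A) \<subseteq> \<Gamma> \<times> lat d \<union> lat d \<times> \<Gamma>" using A \<Gamma> by auto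
      have "(\<lambda>(i,j). 1 * (J i j * u i * u j)) summable_on (A \<times> (lat d - A))"
        by (rule summable_uu[OF \<Gamma> sub cu]) simp
      then show "(\<lambda>(i,j). J i j * u i * u j) summable_on (A \<times> (lat d - A))" by simp
    qed
    then show ?thesis by (simp add: case_prod_unfold)
  qed
  finally have "Hen d J \<Gamma> v - Hen d J \<Gamma> u = 4 * infsum (\<lambda>(i,j). J i j * u i * u j) (A \<times> (lat d - A))"
    by simp
  then show ?thesis using HH by linarith
qed

end



context setting begin

lemma perim_split:
  assumes cu: "config d u" and \<Gamma>: "finite \<Gamma>" "\<Gamma> \<subseteq> lat d" and A: "A \<subseteq> \<Gamma>"
    and h: "0 \<le> infsum (\<lambda>(i,j). J i j * u i * u j) (A \<times> (lat d - A))"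
  shows "infsum (\<lambda>(i,j). J i j) (A \<times> (lat d - A))
     \<le> 2 * infsum (\<lambda>(i,j). J i j) {p \<in> A \<times> (lat d - A). u (fst p) = u (snd p)}"
proof -
  define P where "P = A \<times> (lat d - A)"
  define Pa where "Pa = {p \<in> P. u (fst p) = u (snd p)}"
  define Pd where "Pd = {p \<in> P. u (fst p) \<noteq> u (snd p)}"
  have PU: "P = Pa \<union> Pd" and disj: "Pa \<inter> Pd = {}" by (auto simp: Pa_def Pd_def)
  have subP: "P \<subseteq> \<Gamma> \<times> lat d \<union> lat d \<times> \<Gamma>" using A \<Gamma> by (auto simp: P_def)
  have subA: "Pa \<subseteq> \<Gamma> \<times> lat d \<union> lat d \<times> \<Gamma>" "Pd \<subseteq> \<Gamma> \<times> lat d \<union> lat d \<times> \<Gamma>"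
    using subP by (auto simp: Pa_def Pd_def)
  have sJa: "(\<lambda>(i,j). J i j) summable_on Pa" by (rule summable_dom[OF \<Gamma> subA(1)])
  have sJd: "(\<lambda>(i,j). J i j) summable_on Pd" by (rule summable_dom[OF \<Gamma> subA(2)])
  have suu: "(\<lambda>(i,j). J i j * u i * u j) summable_on Q" if "Q \<subseteq> \<Gamma> \<times> lat d \<union> lat d \<times> \<Gamma>" for Q
  proof -
    have "(\<lambda>(i,j). 1 * (J i j * u i * u j)) summable_on Q"
      by (rule summable_uu[OF \<Gamma> that cu]) simp
    then show ?thesis by simp
  qed
  have "infsum (\<lambda>(i,j). J i j * u i * u j) P
      = infsum (\<lambda>(i,j). J i j * u i * u j) Pa + infsum (\<lambda>(i,j). J i j * u i * u j) Pd"
    unfolding PU by (rule infsum_Un_disjoint[OF suu[OF subA(1)] suu[OF subA(2)] disj])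
  also have "infsum (\<lambda>(i,j). J i j * u i * u j) Pa = infsum (\<lambda>(i,j). J i j) Pa"
  proof (rule infsum_cong)
    fix p assume p: "p \<in> Pa"
    obtain i j where pij: "p = (i, j)" by (cases p)
    have l: "i \<in> lat d" "j \<in> lat d" and e: "u i = u j" using p pij A \<Gamma> by (auto simp: Pa_def P_def)
    have "u i * u j = 1" using config_lat[OF cu l(1)] e by auto
    then show "(case p of (i, j) \<Rightarrow> J i j * u i * u j) = (case p of (i, j) \<Rightarrow> J i j)"
      using pij by (simp add: mult.assoc)
  qed
  also have "infsum (\<lambda>(i,j). J i j * u i * u j) Pd = infsum (\<lambda>p. - (\<lambda>(i,j). J i j) p) Pd"
  proof (rule infsum_cong)
    fix p assume p: "p \<in> Pd"
    obtain i j where pij: "p = (i, j)" by (cases p)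
    have l: "i \<in> lat d" "j \<in> lat d" and e: "u i \<noteq> u j" using p pij A \<Gamma> by (auto simp: Pd_def P_def)
    have "u i * u j = -1" using config_lat[OF cu l(1)] config_lat[OF cu l(2)] e by auto
    then show "(case p of (i, j) \<Rightarrow> J i j * u i * u j) = - (case p of (i, j) \<Rightarrow> J i j)"
      using pij by (simp add: mult.assoc)
  qed
  also have "\<dots> = - infsum (\<lambda>(i,j). J i j) Pd" by (rule infsum_uminus)
  finally have h2: "infsum (\<lambda>(i,j). J i j * u i * u j) P = infsum (\<lambda>(i,j). J i j) Pa - infsum (\<lambda>(i,j). J i j) Pd"
    by simp
  have "infsum (\<lambda>(i,j). J i j) P = infsum (\<lambda>(i,j). J i j) Pa + infsum (\<lambda>(i,j). J i j) Pd"
    unfolding PU by (rule infsum_Un_disjoint[OF sJa sJd disj])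
  then show ?thesis using h h2 by (simp add: P_def[symmetric] Pa_def[symmetric])
qed

lemma key:
  assumes mn: "minimizer d J (cube d l q) u" and rl: "r \<le> l"
  shows "infsum (\<lambda>(i,j). J i j) ({x \<in> cube d r q. u x = \<sigma>} \<times> (lat d - {x \<in> cube d r q. u x = \<sigma>}))
     \<le> 2 * infsum (\<lambda>(i,j). J i j) ({x \<in> cube d r q. u x = \<sigma>} \<times> (lat d - cube d r q))"
proof -
  define A where "A = {x \<in> cube d r q. u x = \<sigma>}"
  have cu: "config d u" using mn by (simp add: minimizer_def)
  have \<Gamma>: "finite (cube d l q)" "cube d l q \<subseteq> lat d" by (auto simp: cube_finite cube_lat)
  have A\<Gamma>: "A \<subseteq> cube d l q" using cube_mono[OF rl, of d q] by (auto simp: A_def)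
  have Afin: "finite A" "A \<subseteq> lat d" using A\<Gamma> \<Gamma> finite_subset by auto
  have "infsum (\<lambda>(i,j). J i j) (A \<times> (lat d - A))
     \<le> 2 * infsum (\<lambda>(i,j). J i j) {p \<in> A \<times> (lat d - A). u (fst p) = u (snd p)}"
    by (rule perim_split[OF cu \<Gamma> A\<Gamma> flip[OF mn \<Gamma> A\<Gamma>]])
  also have "infsum (\<lambda>(i,j). J i j) {p \<in> A \<times> (lat d - A). u (fst p) = u (snd p)}
      \<le> infsum (\<lambda>(i,j). J i j) (A \<times> (lat d - cube d r q))"
  proof (rule infsum_mono_neutral)
    show "(\<lambda>(i,j). J i j) summable_on {p \<in> A \<times> (lat d - A). u (fst p) = u (snd p)}"
      by (rule summable_left[OF Afin]) auto
    show "(\<lambda>(i,j). J i j) summable_on (A \<times> (lat d - cube d r q))"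
      by (rule summable_left[OF Afin]) auto
    fix p assume p: "p \<in> {p \<in> A \<times> (lat d - A). u (fst p) = u (snd p)} - A \<times> (lat d - cube d r q)"
    obtain i j where pij: "p = (i, j)" by (cases p)
    have "i \<in> A" "j \<in> lat d" "j \<notin> A" "u i = u j" using p pij by auto
    moreover have "j \<in> cube d r q" using p pij by auto
    ultimately show "(case p of (i, j) \<Rightarrow> J i j) \<le> 0" by (auto simp: A_def)
  next
    fix p assume p: "p \<in> A \<times> (lat d - cube d r q) - {p \<in> A \<times> (lat d - A). u (fst p) = u (snd p)}"
    obtain i j where pij: "p = (i, j)" by (cases p)
    have "i \<in> lat d" "j \<in> lat d" using p pij Afin by auto
    then show "0 \<le> (case p of (i, j) \<Rightarrow> J i j)" using pij by (simp add: J0)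
  qed simp
  finally show ?thesis unfolding A_def by simp
qed

end



definition cI :: "nat \<Rightarrow> real \<Rightarrow> real \<Rightarrow> real" where
  "cI d s lam = lam / 2 * real d powr (-(real d + s)) * 2 powr (-s) * 2 powr (-s / real d)"

context setting begin

lemma cI_pos: "0 < cI d s lam" using lam0 d1 by (simp add: cI_def)

lemma per_point:
  assumes A: "finite A" "A \<subseteq> lat d" and x: "x \<in> A" and R: "1 \<le> R"
  shows "real (card (cube d R x - A)) * (lam * (real d * real R) powr (-(real d + s)))
     \<le> (\<Sum>y\<in>cube d R x - A. J x y)"
proof (rule sum_bounded_below)
  fix y assume y: "y \<in> cube d R x - A"
  have xl: "x \<in> lat d" using A x by auto
  have yl: "y \<in> lat d" and yx: "y \<noteq> x" using y x cube_lat by auto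
  have n1: "1 \<le> norm1 d (x - y)" using norm1_pos[OF xl yl] yx by auto
  have n2: "norm1 d (x - y) \<le> int d * int R" using y by (intro norm1_cube_le) auto
  have "(real d * real R) powr (-(real d + s)) \<le> real_of_int (norm1 d (x - y)) powr (-(real d + s))"
  proof (rule powr_mono2')
    show "- (real d + s) \<le> 0" using s0 by simp
    show "0 < real_of_int (norm1 d (x - y))" using n1 by simp
    have "real_of_int (norm1 d (x - y)) \<le> real_of_int (int d * int R)" using n2 by (simp only: of_int_le_iff)
    then show "real_of_int (norm1 d (x - y)) \<le> real d * real R" by simp
  qed
  then have "lam * (real d * real R) powr (-(real d + s)) \<le> lam * real_of_int (norm1 d (x - y)) powr (-(real d + s))"
    using lam0 by (intro mult_left_mono) auto
  also have "\<dots> \<le> J x y" using Jlow[OF xl yl] yx by auto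
  finally show "lam * (real d * real R) powr (-(real d + s)) \<le> J x y" .
qed

lemma iso:
  assumes A: "finite A" "A \<subseteq> lat d"
  shows "cI d s lam * real (card A) powr (1 - s / real d) \<le> infsum (\<lambda>(i,j). J i j) (A \<times> (lat d - A))"
proof (cases "A = {}")
  case True
  then show ?thesis by (simp add: infsum_nonneg)
next
  case False
  define n where "n = card A"
  have n1: "1 \<le> n" using False A by (simp add: n_def Suc_le_eq card_gt_0_iff)
  have dpos: "0 < real d" using d1 by simp
  define t where "t = (2 * real n) powr (1 / real d)"
  have t1: "1 \<le> t" unfolding t_def using n1 by (intro ge_one_powr_ge_zero) auto
  define R where "R = nat \<lceil>t\<rceil>"
  have Rt: "t \<le> real R" "real R \<le> t + 1" unfolding R_def using t1 by linarith+
  have R1: "1 \<le> R" using Rt t1 by linarith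
  have R2t: "real R \<le> 2 * t" using Rt t1 by linarith
  have td: "t ^ d = 2 * real n"
  proof -
    have "t ^ d = t powr real d" using t1 by (simp add: powr_realpow)
    also have "\<dots> = (2 * real n) powr (1 / real d * real d)" unfolding t_def by (simp add: powr_powr)
    also have "\<dots> = 2 * real n" using dpos n1 by simp
    finally show ?thesis .
  qed
  have Rd: "real R ^ d \<ge> 2 * real n" using td power_mono[OF Rt(1), of d] t1 by simp
  define p where "p = real d + s"
  define b where "b = lam / 2 * real d powr (-p) * real R powr (-s)"
  have bx: "b \<le> (\<Sum>y\<in>cube d R x - A. J x y)" if x: "x \<in> A" for x
  proof -
    have "card (cube d R x) - card A \<le> card (cube d R x - A)"
      by (rule diff_card_le_card_Diff[OF A(1)])
    then have "real (card (cube d R x)) - real n \<le> real (card (cube d R x - A))"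
      unfolding n_def by linarith
    moreover have "real (card (cube d R x)) = (2 * real R + 1) ^ d" by (simp add: cube_card add.commute)
    moreover have "real R ^ d \<le> (2 * real R + 1) ^ d" by (intro power_mono) auto
    ultimately have c: "real R ^ d / 2 \<le> real (card (cube d R x - A))" using Rd by linarith
    have e: "real R ^ d * (real d * real R) powr (-p) = real d powr (-p) * real R powr (-s)"
    proof -
      have "(real d * real R) powr (-p) = real d powr (-p) * real R powr (-p)" by (rule powr_mult)
      moreover have "real R ^ d = real R powr real d" using R1 by (simp add: powr_realpow)
      moreover have "real R powr real d * real R powr (-p) = real R powr (-s)"
        by (simp add: powr_add[symmetric] p_def)
      ultimately show ?thesis by (simp add: algebra_simps)
    qed
    have "b = real R ^ d / 2 * (lam * (real d * real R) powr (-p))"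
      unfolding b_def using e by (simp add: algebra_simps)
    also have "\<dots> \<le> real (card (cube d R x - A)) * (lam * (real d * real R) powr (-p))"
      using c lam0 by (intro mult_right_mono) auto
    also have "\<dots> \<le> (\<Sum>y\<in>cube d R x - A. J x y)"
      unfolding p_def by (rule per_point[OF A x R1])
    finally show ?thesis .
  qed
  have bb: "cI d s lam * real n powr (- s / real d) \<le> b"
  proof -
    have "(2 * t) powr (-s) \<le> real R powr (-s)"
      by (rule powr_mono2') (use s0 t1 R2t R1 in auto)
    moreover have "(2 * t) powr (-s) = 2 powr (-s) * (2 powr (-s / real d) * real n powr (-s / real d))"
    proof -
      have "(2 * t) powr (-s) = 2 powr (-s) * t powr (-s)" by (rule powr_mult)
      moreover have "t powr (-s) = (2 * real n) powr (1 / real d * (-s))" unfolding t_def by (simp add: powr_powr)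
      moreover have "(2 * real n) powr (1 / real d * (-s)) = 2 powr (-s / real d) * real n powr (-s / real d)"
        by (simp add: powr_mult)
      ultimately show ?thesis by simp
    qed
    ultimately have "2 powr (-s) * (2 powr (-s / real d) * real n powr (-s / real d)) \<le> real R powr (-s)"
      by simp
    then have "lam / 2 * real d powr (-p) * (2 powr (-s) * (2 powr (-s / real d) * real n powr (-s / real d)))
        \<le> lam / 2 * real d powr (-p) * real R powr (-s)"
      using lam0 by (intro mult_left_mono) auto
    then show ?thesis by (simp add: cI_def b_def p_def mult.assoc)
  qed
  define B where "B = Sigma A (\<lambda>x. cube d R x - A)"
  have finB: "finite B" unfolding B_def using A by (auto intro!: finite_SigmaI simp: cube_finite)
  have BP: "B \<subseteq> A \<times> (lat d - A)" unfolding B_def using cube_lat by auto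
  have "real n * (cI d s lam * real n powr (- s / real d)) \<le> (\<Sum>x\<in>A. \<Sum>y\<in>cube d R x - A. J x y)"
  proof -
    have "real (card A) * (cI d s lam * real n powr (- s / real d)) \<le> (\<Sum>x\<in>A. \<Sum>y\<in>cube d R x - A. J x y)"
      by (rule sum_bounded_below) (rule order_trans[OF bb bx])
    then show ?thesis by (simp add: n_def)
  qed
  also have "\<dots> = (\<Sum>(i,j)\<in>B. J i j)"
    unfolding B_def by (rule sum.Sigma) (use A in \<open>auto simp: cube_finite\<close>)
  also have "\<dots> \<le> infsum (\<lambda>(i,j). J i j) (A \<times> (lat d - A))"
  proof (rule finite_sum_le_infsum[OF _ finB BP])
    show "(\<lambda>(i,j). J i j) summable_on (A \<times> (lat d - A))" by (rule summable_left[OF A]) auto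
    fix p assume p: "p \<in> A \<times> (lat d - A) - B"
    obtain i j where pij: "p = (i, j)" by (cases p)
    have "i \<in> lat d" "j \<in> lat d" using p pij A by auto
    then show "0 \<le> (case p of (i, j) \<Rightarrow> J i j)" using pij by (simp add: J0)
  qed
  finally have h: "real n * (cI d s lam * real n powr (- s / real d)) \<le> infsum (\<lambda>(i,j). J i j) (A \<times> (lat d - A))" .
  have "real n * real n powr (- s / real d) = real n powr (1 - s / real d)"
  proof -
    have "real n powr (1 + (- s / real d)) = real n powr 1 * real n powr (- s / real d)" by (rule powr_add)
    then show ?thesis using n1 by simp
  qed
  note eq = this
  have "real n * (cI d s lam * real n powr (- s / real d)) = cI d s lam * (real n * real n powr (- s / real d))"
    by (rule mult.left_commute)
  also have "\<dots> = cI d s lam * real n powr (1 - s / real d)" by (simp only: eq)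
  finally have e2: "real n * (cI d s lam * real n powr (- s / real d)) = cI d s lam * real n powr (1 - s / real d)" .
  have "cI d s lam * real n powr (1 - s / real d) \<le> infsum (\<lambda>(i,j). J i j) (A \<times> (lat d - A))"
    using h unfolding e2 .
  then show ?thesis unfolding n_def .
qed

end



definition linf :: "nat \<Rightarrow> (nat \<Rightarrow> int) \<Rightarrow> (nat \<Rightarrow> int) \<Rightarrow> nat" where
  "linf d x q = Max ((\<lambda>n. nat \<bar>x n - q n\<bar>) ` {..<d})"

lemma mem_cube_linf:
  assumes "1 \<le> d" "x \<in> lat d"
  shows "x \<in> cube d t q \<longleftrightarrow> linf d x q \<le> t"
proof -
  have "0 \<in> {..<d}" using assms by simp
  then have ne: "(\<lambda>n. nat \<bar>x n - q n\<bar>) ` {..<d} \<noteq> {}" by blast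
  have "linf d x q \<le> t \<longleftrightarrow> (\<forall>n<d. nat \<bar>x n - q n\<bar> \<le> t)"
    unfolding linf_def by (subst Max_le_iff) (use ne in auto)
  also have "\<dots> \<longleftrightarrow> (\<forall>n<d. \<bar>x n - q n\<bar> \<le> int t)" by (auto simp: nat_le_iff)
  finally show ?thesis using assms by (simp add: cube_def)
qed

lemma sum_Sigma_le:
  fixes f :: "'a \<Rightarrow> 'b \<Rightarrow> real"
  assumes A: "finite A" and G: "finite G" "G \<subseteq> A \<times> UNIV"
    and b: "\<And>x. x \<in> A \<Longrightarrow> sum (f x) {y. (x, y) \<in> G} \<le> b x"
  shows "(\<Sum>(i,j)\<in>G. f i j) \<le> (\<Sum>x\<in>A. b x)"
proof -
  define B where "B x = {y. (x, y) \<in> G}" for x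
  have GS: "G = Sigma A B" using G by (auto simp: B_def)
  have finB: "finite (B x)" for x
  proof -
    have "B x \<subseteq> snd ` G" by (force simp: B_def)
    then show ?thesis using G finite_subset by blast
  qed
  have "(\<Sum>(i,j)\<in>G. f i j) = (\<Sum>x\<in>A. \<Sum>y\<in>B x. f x y)"
    unfolding GS by (rule sum.Sigma[symmetric]) (use A finB in auto)
  also have "\<dots> \<le> (\<Sum>x\<in>A. b x)"
    by (rule sum_mono) (use b in \<open>auto simp: B_def\<close>)
  finally show ?thesis .
qed

context setting begin

lemma CT_pos: "0 < CT d s"
proof -
  have "0 < 1 + 1 / s" using s0 by (simp add: add_pos_pos)
  then show ?thesis unfolding CT_def using d1 by (intro mult_pos_pos) auto
qed

lemma out_row:
  assumes x: "x \<in> lat d" and tr: "linf d x q \<le> r" and G: "finite G" "G \<subseteq> lat d - cube d r q"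
  shows "(\<Sum>y\<in>G. J x y) \<le> Lam * CT d s * real (r - linf d x q + 1) powr (-s)"
proof (rule tail_J[OF x])
  show "1 \<le> r - linf d x q + 1" by simp
  show "finite G" by (rule G(1))
  have xc: "x \<in> cube d (linf d x q) q" using mem_cube_linf[OF d1 x] by simp
  show "G \<subseteq> lat d - cube d (r - linf d x q + 1 - 1) x"
  proof
    fix y assume y: "y \<in> G"
    have "y \<notin> cube d (r - linf d x q) x"
    proof
      assume "y \<in> cube d (r - linf d x q) x"
      then have "y \<in> cube d (linf d x q + (r - linf d x q)) q" by (rule cube_tri[OF xc])
      then have "y \<in> cube d r q" using tr by simp
      then show False using y G by blast
    qed
    then show "y \<in> lat d - cube d (r - linf d x q + 1 - 1) x" using y G by auto
  qed
qed

lemma out_bound: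
  assumes A: "finite A" "A \<subseteq> cube d r q"
  shows "infsum (\<lambda>(i,j). J i j) (A \<times> (lat d - cube d r q))
    \<le> (\<Sum>x\<in>A. Lam * CT d s * real (r - linf d x q + 1) powr (-s))"
proof (rule infsum_le_finite_sums)
  have Al: "A \<subseteq> lat d" using A cube_lat by blast
  show "(\<lambda>(i,j). J i j) summable_on (A \<times> (lat d - cube d r q))"
    by (rule summable_left[OF A(1) Al]) auto
  fix F assume F: "finite F" "F \<subseteq> A \<times> (lat d - cube d r q)"
  show "sum (\<lambda>(i,j). J i j) F \<le> (\<Sum>x\<in>A. Lam * CT d s * real (r - linf d x q + 1) powr (-s))"
  proof (rule sum_Sigma_le[OF A(1) F(1)])
    show "F \<subseteq> A \<times> UNIV" using F by auto
    fix x assume x: "x \<in> A"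
    have xl: "x \<in> lat d" using x Al by auto
    have "linf d x q \<le> r" using x A mem_cube_linf[OF d1 xl] by auto
    moreover have "finite {y. (x, y) \<in> F}"
    proof -
      have "{y. (x, y) \<in> F} \<subseteq> snd ` F" by force
      then show ?thesis using F finite_subset by blast
    qed
    moreover have "{y. (x, y) \<in> F} \<subseteq> lat d - cube d r q" using F by auto
    ultimately show "sum (J x) {y. (x, y) \<in> F} \<le> Lam * CT d s * real (r - linf d x q + 1) powr (-s)"
      by (intro out_row[OF xl]) auto
  qed
qed

lemma inner_r:
  assumes "t \<le> R"
  shows "(\<Sum>r\<in>{R'..R}. if t \<le> r then real (r - t + 1) powr (-s) else 0)
     \<le> 2 / (1 - s) * real (R + 1) powr (1 - s)"
proof -
  have "(\<Sum>r\<in>{R'..R}. if t \<le> r then real (r - t + 1) powr (-s) else 0)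
      = (\<Sum>r\<in>{R'..R} \<inter> {t..}. real (r - t + 1) powr (-s))"
  proof -
    have "(\<Sum>r\<in>{R'..R} \<inter> {t..}. real (r - t + 1) powr (-s))
       = (\<Sum>r\<in>{R'..R}. if r \<in> {t..} then real (r - t + 1) powr (-s) else 0)"
      by (rule sum.inter_restrict) simp
    then show ?thesis by (simp only: atLeast_iff)
  qed
  also have "\<dots> \<le> (\<Sum>r\<in>{t..R}. real (r - t + 1) powr (-s))"
    by (rule sum_mono2) auto
  also have "\<dots> = (\<Sum>m\<in>(\<lambda>r. r - t + 1) ` {t..R}. real m powr (-s))"
  proof -
    have "inj_on (\<lambda>r. r - t + 1) {t..R}" by (auto simp: inj_on_def)
    then show ?thesis by (simp add: sum.reindex)
  qed
  also have "\<dots> \<le> (\<Sum>m\<in>{1..R+1}. real m powr (-s))"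
    by (rule sum_mono2) auto
  also have "\<dots> \<le> 2 / (1 - s) * real (R + 1) powr (1 - s)"
    by (rule sum_tel2[OF s0 s1])
  finally show ?thesis .
qed

end



definition AS :: "nat \<Rightarrow> ((nat \<Rightarrow> int) \<Rightarrow> real) \<Rightarrow> real \<Rightarrow> (nat \<Rightarrow> int) \<Rightarrow> nat \<Rightarrow> (nat \<Rightarrow> int) set" where
  "AS d u \<sigma> q r = {x \<in> cube d r q. u x = \<sigma>}"

lemma AS_finite: "finite (AS d u \<sigma> q r)" unfolding AS_def by (rule finite_subset[OF _ cube_finite]) auto

lemma AS_cube: "AS d u \<sigma> q r \<subseteq> cube d r q" by (auto simp: AS_def)

lemma AS_lat: "AS d u \<sigma> q r \<subseteq> lat d" using AS_cube cube_lat by blast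

lemma AS_mono: "r \<le> r' \<Longrightarrow> AS d u \<sigma> q r \<subseteq> AS d u \<sigma> q r'"
  using cube_mono[of r r' d q] by (auto simp: AS_def)

context setting begin

lemma AS_restrict:
  assumes "r \<le> R"
  shows "AS d u \<sigma> q r = AS d u \<sigma> q R \<inter> {x. linf d x q \<le> r}"
proof (intro equalityI subsetI)
  fix x assume x: "x \<in> AS d u \<sigma> q r"
  have xl: "x \<in> lat d" using x AS_lat[of d u \<sigma> q r] by blast
  have "x \<in> cube d r q" using x AS_cube[of d u \<sigma> q r] by blast
  then have "linf d x q \<le> r" using mem_cube_linf[OF d1 xl] by simp
  then show "x \<in> AS d u \<sigma> q R \<inter> {x. linf d x q \<le> r}" using x AS_mono[OF assms, of d u \<sigma> q] by blast
next
  fix x assume x: "x \<in> AS d u \<sigma> q R \<inter> {x. linf d x q \<le> r}"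
  have xl: "x \<in> lat d" using x AS_lat[of d u \<sigma> q R] by blast
  have "x \<in> cube d r q" using x mem_cube_linf[OF d1 xl] by simp
  then show "x \<in> AS d u \<sigma> q r" using x by (simp add: AS_def)
qed

lemma double_sum:
  fixes R' R :: nat
  shows "(\<Sum>r\<in>{R'..R}. \<Sum>x\<in>AS d u \<sigma> q r. Lam * CT d s * real (r - linf d x q + 1) powr (-s))
     \<le> real (card (AS d u \<sigma> q R)) * (Lam * CT d s * (2 / (1 - s) * real (R + 1) powr (1 - s)))"
proof -
  define h where "h r x = Lam * CT d s * real (r - linf d x q + 1) powr (-s)" for r x
  define B where "B = AS d u \<sigma> q R"
  have "(\<Sum>r\<in>{R'..R}. \<Sum>x\<in>AS d u \<sigma> q r. h r x)
      = (\<Sum>r\<in>{R'..R}. \<Sum>x\<in>B. if linf d x q \<le> r then h r x else 0)"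
  proof (rule sum.cong)
    fix r assume r: "r \<in> {R'..R}"
    have "(\<Sum>x\<in>AS d u \<sigma> q r. h r x) = (\<Sum>x\<in>B \<inter> {x. linf d x q \<le> r}. h r x)"
      using AS_restrict[of r R u \<sigma> q] r by (simp add: B_def)
    also have "\<dots> = (\<Sum>x\<in>B. if x \<in> {x. linf d x q \<le> r} then h r x else 0)"
      by (rule sum.inter_restrict) (simp add: B_def AS_finite)
    finally show "(\<Sum>x\<in>AS d u \<sigma> q r. h r x) = (\<Sum>x\<in>B. if linf d x q \<le> r then h r x else 0)"
      by simp
  qed simp
  also have "\<dots> = (\<Sum>x\<in>B. \<Sum>r\<in>{R'..R}. if linf d x q \<le> r then h r x else 0)"
    by (rule sum.swap)
  also have "\<dots> \<le> (\<Sum>x\<in>B. Lam * CT d s * (2 / (1 - s) * real (R + 1) powr (1 - s)))"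
  proof (rule sum_mono)
    fix x assume x: "x \<in> B"
    have xl: "x \<in> lat d" using x AS_lat[of d u \<sigma> q R] by (auto simp: B_def)
    have tR: "linf d x q \<le> R" using x AS_cube[of d u \<sigma> q R] mem_cube_linf[OF d1 xl] by (auto simp: B_def)
    have "(\<Sum>r\<in>{R'..R}. if linf d x q \<le> r then h r x else 0)
        = Lam * CT d s * (\<Sum>r\<in>{R'..R}. if linf d x q \<le> r then real (r - linf d x q + 1) powr (-s) else 0)"
      by (simp add: sum_distrib_left h_def if_distrib cong: if_cong)
    also have "\<dots> \<le> Lam * CT d s * (2 / (1 - s) * real (R + 1) powr (1 - s))"
      by (rule mult_left_mono[OF inner_r[OF tR]]) (use Lam0 CT_pos in simp)
    finally show "(\<Sum>r\<in>{R'..R}. if linf d x q \<le> r then h r x else 0)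
        \<le> Lam * CT d s * (2 / (1 - s) * real (R + 1) powr (1 - s))" .
  qed
  also have "\<dots> = real (card B) * (Lam * CT d s * (2 / (1 - s) * real (R + 1) powr (1 - s)))"
    by simp
  finally show ?thesis by (simp add: h_def B_def)
qed

lemma recur:
  assumes mn: "minimizer d J (cube d l q) u" and R1: "1 \<le> R'" and Rl: "2 * R' \<le> l"
  shows "real (R' + 1) * (cI d s lam * real (card (AS d u \<sigma> q R')) powr (1 - s / real d))
     \<le> 2 * (real (card (AS d u \<sigma> q (2 * R'))) * (Lam * CT d s * (2 / (1 - s) * real (2 * R' + 1) powr (1 - s))))"
proof -
  define c where "c = cI d s lam * real (card (AS d u \<sigma> q R')) powr (1 - s / real d)"
  define h where "h r x = Lam * CT d s * real (r - linf d x q + 1) powr (-s)" for r x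
  have e0: "0 \<le> 1 - s / real d"
  proof -
    have "s / real d \<le> s" using s0 d1 by (simp add: divide_le_eq)  
    then show ?thesis using s1 by simp
  qed
  have step: "c \<le> 2 * (\<Sum>x\<in>AS d u \<sigma> q r. h r x)" if r: "r \<in> {R'..2 * R'}" for r
  proof -
    have "card (AS d u \<sigma> q R') \<le> card (AS d u \<sigma> q r)"
      using r by (intro card_mono AS_finite AS_mono) auto
    then have "real (card (AS d u \<sigma> q R')) powr (1 - s / real d) \<le> real (card (AS d u \<sigma> q r)) powr (1 - s / real d)"
      using e0 by (intro powr_mono2) auto
    then have "c \<le> cI d s lam * real (card (AS d u \<sigma> q r)) powr (1 - s / real d)"
      unfolding c_def using cI_pos by (intro mult_left_mono) auto
    also have "\<dots> \<le> infsum (\<lambda>(i,j). J i j) (AS d u \<sigma> q r \<times> (lat d - AS d u \<sigma> q r))"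
      by (rule iso[OF AS_finite AS_lat])
    also have "\<dots> \<le> 2 * infsum (\<lambda>(i,j). J i j) (AS d u \<sigma> q r \<times> (lat d - cube d r q))"
      using key[OF mn, of r \<sigma>] r Rl by (simp add: AS_def)
    also have "\<dots> \<le> 2 * (\<Sum>x\<in>AS d u \<sigma> q r. h r x)"
      unfolding h_def by (intro mult_left_mono out_bound AS_finite AS_cube) auto
    finally show ?thesis .
  qed
  have cardr: "card {R'..2 * R'} = R' + 1" by simp
  have "real (R' + 1) * c = (\<Sum>r\<in>{R'..2 * R'}. c)" using cardr by simp
  also have "\<dots> \<le> (\<Sum>r\<in>{R'..2 * R'}. 2 * (\<Sum>x\<in>AS d u \<sigma> q r. h r x))"
    by (rule sum_mono) (rule step)
  also have "\<dots> = 2 * (\<Sum>r\<in>{R'..2 * R'}. \<Sum>x\<in>AS d u \<sigma> q r. h r x)"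
    by (simp add: sum_distrib_left)
  also have "\<dots> \<le> 2 * (real (card (AS d u \<sigma> q (2 * R'))) * (Lam * CT d s * (2 / (1 - s) * real (2 * R' + 1) powr (1 - s))))"
    unfolding h_def by (intro mult_left_mono double_sum) auto
  finally show ?thesis by (simp add: c_def)
qed

end



definition KK :: "nat \<Rightarrow> real \<Rightarrow> real \<Rightarrow> real \<Rightarrow> real" where
  "KK d s lam Lam = cI d s lam * (1 - s) / (12 * (Lam * CT d s))"

definition c0 :: "nat \<Rightarrow> real \<Rightarrow> real \<Rightarrow> real \<Rightarrow> real" where
  "c0 d s lam Lam = min 1 ((KK d s lam Lam / 2 ^ d) powr (real d / s))"

context setting begin

lemma KK_pos: "0 < KK d s lam Lam"
  unfolding KK_def using cI_pos CT_pos s1 lam0 lamLam by (intro divide_pos_pos mult_pos_pos) auto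

lemma c0_pos: "0 < c0 d s lam Lam"
  unfolding c0_def using KK_pos by simp

lemma c0_le1: "c0 d s lam Lam \<le> 1" unfolding c0_def by simp

lemma growth:
  assumes mn: "minimizer d J (cube d l q) u" and R1: "1 \<le> R'" and Rl: "2 * R' \<le> l"
  shows "KK d s lam Lam * real R' powr s * real (card (AS d u \<sigma> q R')) powr (1 - s / real d)
     \<le> real (card (AS d u \<sigma> q (2 * R')))"
proof -
  define V where "V = real (card (AS d u \<sigma> q (2 * R')))"
  define X where "X = real (card (AS d u \<sigma> q R')) powr (1 - s / real d)"
  define \<rho> where "\<rho> = real R'"
  define L where "L = Lam * CT d s"
  define a where "a = 1 - s"
  have a0: "0 < a" using s1 by (simp add: a_def)
  have L0: "0 < L" unfolding L_def using CT_pos lam0 lamLam by (intro mult_pos_pos) auto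
  have \<rho>1: "1 \<le> \<rho>" using R1 by (simp add: \<rho>_def)
  have V0: "0 \<le> V" by (simp add: V_def)
  have X0: "0 \<le> X" by (simp add: X_def)
  have rec: "(\<rho> + 1) * (cI d s lam * X) \<le> 2 * (V * (L * (2 / a * (2 * \<rho> + 1) powr a)))"
    using recur[OF mn R1 Rl, of \<sigma>] by (simp add: V_def X_def \<rho>_def L_def a_def add.commute)
  have P: "(2 * \<rho> + 1) powr a \<le> 3 * \<rho> powr a"
  proof -
    have "(2 * \<rho> + 1) powr a \<le> (3 * \<rho>) powr a" using \<rho>1 a0 by (intro powr_mono2) auto
    also have "\<dots> = 3 powr a * \<rho> powr a" by (rule powr_mult)
    also have "3 powr a \<le> 3 powr (1::real)" using a0 s0 by (intro powr_mono) (auto simp: a_def)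
    then have "3 powr a * \<rho> powr a \<le> 3 * \<rho> powr a" by (intro mult_right_mono) auto
    finally show ?thesis .
  qed
  have "\<rho> * (cI d s lam * X) \<le> (\<rho> + 1) * (cI d s lam * X)"
    using cI_pos X0 by (intro mult_right_mono) auto
  also have "\<dots> \<le> 2 * (V * (L * (2 / a * (2 * \<rho> + 1) powr a)))" by (rule rec)
  also have "\<dots> = (4 * V * L / a) * (2 * \<rho> + 1) powr a" by (simp add: field_simps)
  also have "\<dots> \<le> (4 * V * L / a) * (3 * \<rho> powr a)"
    using P V0 L0 a0 by (intro mult_left_mono) auto
  finally have h1: "\<rho> * (cI d s lam * X) \<le> (12 * V * L / a) * \<rho> powr a" by (simp add: field_simps)
  have "\<rho> powr (s + a) = \<rho> powr s * \<rho> powr a" by (rule powr_add)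
  then have rr: "\<rho> = \<rho> powr s * \<rho> powr a" using \<rho>1 by (simp add: a_def)
  have "\<rho> powr a * (\<rho> powr s * (cI d s lam * X)) = (\<rho> powr s * \<rho> powr a) * (cI d s lam * X)"
    by (simp only: ac_simps)
  also have "\<dots> = \<rho> * (cI d s lam * X)" by (simp only: rr[symmetric])
  also have "\<dots> \<le> (12 * V * L / a) * \<rho> powr a" by (rule h1)
  also have "\<dots> = \<rho> powr a * (12 * V * L / a)" by (rule mult.commute)
  finally have "\<rho> powr a * (\<rho> powr s * (cI d s lam * X)) \<le> \<rho> powr a * (12 * V * L / a)" .
  then have h2: "\<rho> powr s * (cI d s lam * X) \<le> 12 * V * L / a"
    using \<rho>1 by (subst (asm) mult_le_cancel_left_pos) auto
  have "KK d s lam Lam * \<rho> powr s * X = (a / (12 * L)) * (\<rho> powr s * (cI d s lam * X))"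
    by (simp add: KK_def L_def a_def field_simps)
  also have "\<dots> \<le> (a / (12 * L)) * (12 * V * L / a)"
    using h2 a0 L0 by (intro mult_left_mono) auto
  also have "\<dots> = V" using a0 L0 by (simp add: field_simps)
  finally show ?thesis by (simp add: V_def X_def \<rho>_def)
qed

lemma c0_prop: "c0 d s lam Lam * 2 ^ d \<le> KK d s lam Lam * c0 d s lam Lam powr (1 - s / real d)"
proof -
  define c where "c = c0 d s lam Lam"
  define K where "K = KK d s lam Lam"
  have c0': "0 < c" using c0_pos by (simp add: c_def)
  have K0: "0 < K" using KK_pos by (simp add: K_def)
  have dpos: "0 < real d" using d1 by simp
  have "c \<le> (K / 2 ^ d) powr (real d / s)" unfolding c_def c0_def K_def by simp
  then have "c powr (s / real d) \<le> ((K / 2 ^ d) powr (real d / s)) powr (s / real d)"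
    using c0' s0 dpos by (intro powr_mono2) auto
  also have "\<dots> = K / 2 ^ d" using s0 dpos K0 by (simp add: powr_powr)
  finally have cs: "c powr (s / real d) \<le> K / 2 ^ d" .
  have "c powr (s / real d + (1 - s / real d)) = c powr (s / real d) * c powr (1 - s / real d)"
    by (rule powr_add)
  then have ce: "c = c powr (s / real d) * c powr (1 - s / real d)" using c0' by simp
  have "c * 2 ^ d = c powr (s / real d) * 2 ^ d * c powr (1 - s / real d)"
    by (subst ce) (simp add: algebra_simps)
  also have "\<dots> \<le> (K / 2 ^ d) * 2 ^ d * c powr (1 - s / real d)"
    using cs by (intro mult_right_mono) auto
  also have "\<dots> = K * c powr (1 - s / real d)" by simp
  finally show ?thesis by (simp add: c_def K_def)
qed

lemma dyadic:
  assumes mn: "minimizer d J (cube d l q) u" and base: "1 \<le> card (AS d u \<sigma> q 1)"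
  shows "2 ^ k \<le> l \<Longrightarrow> c0 d s lam Lam * real (2 ^ k) ^ d \<le> real (card (AS d u \<sigma> q (2 ^ k)))"
proof (induction k)
  case 0
  then show ?case using base c0_le1 by simp
next
  case (Suc k)
  define X where "X = real ((2::nat) ^ k)"
  define c where "c = c0 d s lam Lam"
  define e where "e = 1 - s / real d"
  have X1: "1 \<le> X" by (simp add: X_def)
  have c0': "0 < c" using c0_pos by (simp add: c_def)
  have dpos: "0 < real d" using d1 by simp
  have e0: "0 \<le> e"
  proof -
    have "s / real d \<le> s" using s0 d1 by (simp add: divide_le_eq)
    then show ?thesis using s1 by (simp add: e_def)
  qed
  have kl: "2 ^ k \<le> l" using Suc.prems by (simp add: order_trans[OF _ Suc.prems])
  have IH: "c * X ^ d \<le> real (card (AS d u \<sigma> q (2 ^ k)))" using Suc.IH[OF kl] by (simp add: c_def X_def)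
  have g: "KK d s lam Lam * X powr s * real (card (AS d u \<sigma> q (2 ^ k))) powr e
      \<le> real (card (AS d u \<sigma> q (2 * 2 ^ k)))"
    using growth[OF mn, of "2 ^ k" \<sigma>] Suc.prems by (simp add: X_def e_def)
  have "(c * X ^ d) powr e \<le> real (card (AS d u \<sigma> q (2 ^ k))) powr e"
    using IH e0 c0' X1 by (intro powr_mono2) auto
  moreover have "(c * X ^ d) powr e = c powr e * X powr (real d - s)"
  proof -
    have "X ^ d = X powr real d" using X1 by (simp add: powr_realpow)
    then have "(c * X ^ d) powr e = c powr e * X powr (real d * e)"
      by (simp add: powr_mult powr_powr)
    moreover have "real d * e = real d - s" using dpos by (simp add: e_def field_simps)
    ultimately show ?thesis by simp
  qed
  ultimately have h: "c powr e * X powr (real d - s) \<le> real (card (AS d u \<sigma> q (2 ^ k))) powr e" by simp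
  have "KK d s lam Lam * X powr s * (c powr e * X powr (real d - s))
     \<le> KK d s lam Lam * X powr s * real (card (AS d u \<sigma> q (2 ^ k))) powr e"
    using h KK_pos X1 by (intro mult_left_mono) auto
  also have "\<dots> \<le> real (card (AS d u \<sigma> q (2 * 2 ^ k)))" by (rule g)
  finally have h2: "KK d s lam Lam * X powr s * (c powr e * X powr (real d - s)) \<le> real (card (AS d u \<sigma> q (2 * 2 ^ k)))" .
  have "X powr s * X powr (real d - s) = X ^ d"
  proof -
    have "X powr (s + (real d - s)) = X powr s * X powr (real d - s)" by (rule powr_add)
    then show ?thesis using X1 by (simp add: powr_realpow)
  qed
  then have "KK d s lam Lam * X powr s * (c powr e * X powr (real d - s)) = (KK d s lam Lam * c powr e) * X ^ d"
    by (simp add: algebra_simps)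
  moreover have "c * 2 ^ d \<le> KK d s lam Lam * c powr e" using c0_prop by (simp add: c_def e_def)
  ultimately have "c * 2 ^ d * X ^ d \<le> real (card (AS d u \<sigma> q (2 * 2 ^ k)))"
    using h2 X1 by (smt (verit) mult_right_mono zero_le_power)
  moreover have "real (2 ^ Suc k) ^ d = 2 ^ d * X ^ d" by (simp add: X_def power_mult_distrib)
  ultimately show ?case by (simp add: c_def mult.assoc)
qed

end



lemma pow2_ivl: "1 \<le> (l::nat) \<Longrightarrow> \<exists>k. 2 ^ k \<le> l \<and> l < 2 * 2 ^ k"
proof (induction l rule: nat_induct_at_least)
  case base
  then show ?case by (intro exI[of _ 0]) simp
next
  case (Suc l)
  then obtain k where k: "2 ^ k \<le> l" "l < 2 * 2 ^ k" by blast
  show ?case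
  proof (cases "Suc l < 2 * 2 ^ k")
    case True
    then show ?thesis using k by (intro exI[of _ k]) auto
  next
    case False
    then have "Suc l = 2 * 2 ^ k" using k by simp
    then show ?thesis by (intro exI[of _ "Suc k"]) auto
  qed
qed

definition Cf :: "nat \<Rightarrow> real \<Rightarrow> real \<Rightarrow> real \<Rightarrow> real" where
  "Cf d s lam Lam = 2 * lam * (c0 d s lam Lam / 2 ^ d)^2 * (2 * real d) powr (-(real d + s))"

lemma Cf_pos:
  assumes "2 \<le> d" "0 < s" "s < 1" "0 < lam" "lam \<le> Lam"
  shows "0 < Cf d s lam Lam"
proof -
  have ci: "0 < cI d s lam" using assms by (simp add: cI_def)
  have "0 < 1 + 1 / s" using assms by (simp add: add_pos_pos)
  then have ct: "0 < CT d s" unfolding CT_def using assms by (intro mult_pos_pos) auto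
  have "0 < KK d s lam Lam"
    unfolding KK_def using ci ct assms by (intro divide_pos_pos mult_pos_pos) auto
  then have "0 < c0 d s lam Lam" unfolding c0_def by simp
  then show ?thesis unfolding Cf_def using assms by (intro mult_pos_pos) auto
qed

lemma cube_pair: "i \<in> cube d l q \<Longrightarrow> j \<in> cube d l q \<Longrightarrow> j \<in> cube d (2 * l) i"
  by (force simp: cube_def)

context setting begin

lemma vol_bound:
  assumes mn: "minimizer d J (cube d l q) u" and base: "1 \<le> card (AS d u \<sigma> q 1)" and l1: "1 \<le> l"
  shows "c0 d s lam Lam / 2 ^ d * real l ^ d \<le> real (card (AS d u \<sigma> q l))"
proof -
  obtain k where k: "2 ^ k \<le> l" "l < 2 * 2 ^ k" using pow2_ivl[OF l1] by blast
  have "l \<le> 2 * 2 ^ k" using k by simp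
  then have "real l \<le> real (2 * 2 ^ k)" by (simp only: of_nat_le_iff)
  then have "real l \<le> 2 * real ((2::nat) ^ k)" by simp
  then have "real l ^ d \<le> (2 * real ((2::nat) ^ k)) ^ d"
    by (intro power_mono) auto
  then have "real l ^ d \<le> 2 ^ d * real ((2::nat) ^ k) ^ d" by (simp add: power_mult_distrib)
  then have "c0 d s lam Lam / 2 ^ d * real l ^ d \<le> c0 d s lam Lam / 2 ^ d * (2 ^ d * real ((2::nat) ^ k) ^ d)"
    using c0_pos by (intro mult_left_mono) auto
  also have "\<dots> = c0 d s lam Lam * real ((2::nat) ^ k) ^ d" by simp
  also have "\<dots> \<le> real (card (AS d u \<sigma> q (2 ^ k)))" by (rule dyadic[OF mn base k(1)])
  also have "\<dots> \<le> real (card (AS d u \<sigma> q l))"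
    using k by (simp add: card_mono AS_finite AS_mono)
  finally show ?thesis .
qed

lemma main_bound:
  assumes mn: "minimizer d J (cube d l q) u" and q: "q \<in> lat d" and bd: "q \<in> bdry d u" and l1: "1 \<le> l"
  shows "Cf d s lam Lam * real l powr (real d - s) \<le> Iint J (cube d l q) (cube d l q) u"
proof -
  define Q where "Q = cube d l q"
  define E where "E = AS d u 1 q l"
  define F where "F = AS d u (-1) q l"
  define p where "p = real d + s"
  define a where "a = c0 d s lam Lam / 2 ^ d"
  have cu: "config d u" using mn by (simp add: minimizer_def)
  have t0: "0 \<le> J i j * (1 - u i * u j)" if "i \<in> Q" "j \<in> Q" for i j
  proof -
    have l: "i \<in> lat d" "j \<in> lat d" using that cube_lat by (auto simp: Q_def)
    have "0 \<le> 1 - u i * u j" using config_lat[OF cu l(1)] config_lat[OF cu l(2)] by auto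
    then show ?thesis using J0[OF l] by simp
  qed
  have EQ: "E \<subseteq> Q" "F \<subseteq> Q" by (auto simp: E_def F_def Q_def AS_def)
  have finQ: "finite Q" by (simp add: Q_def cube_finite)
  have baseE: "1 \<le> card (AS d u 1 q 1)"
  proof -
    have "q \<in> AS d u 1 q 1" using q bd by (auto simp: AS_def bdry_def center_in_cube)
    then show ?thesis using AS_finite by (metis One_nat_def Suc_leI card_gt_0_iff empty_iff)
  qed
  have baseF: "1 \<le> card (AS d u (-1) q 1)"
  proof -
    obtain j where j: "j \<in> lat d" "norm1 d (q - j) = 1" "u j = -1" using bd by (auto simp: bdry_def)
    have "\<bar>j n - q n\<bar> \<le> 1" if "n < d" for n
      using norm1_le_coord[OF that, of "q - j"] j(2) by (simp add: abs_minus_commute)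
    then have "j \<in> AS d u (-1) q 1" using j by (auto simp: AS_def cube_def)
    then show ?thesis using AS_finite by (metis One_nat_def Suc_leI card_gt_0_iff empty_iff)
  qed
  have cE: "a * real l ^ d \<le> real (card E)" unfolding a_def E_def by (rule vol_bound[OF mn baseE l1])
  have cF: "a * real l ^ d \<le> real (card F)" unfolding a_def F_def by (rule vol_bound[OF mn baseF l1])
  have a0: "0 \<le> a" using c0_pos by (simp add: a_def)
  define w where "w = 2 * lam * (2 * real d * real l) powr (-p)"
  have w0: "0 \<le> w" using lam0 by (simp add: w_def)
  have tw: "w \<le> J i j * (1 - u i * u j)" if i: "i \<in> E" and j: "j \<in> F" for i j
  proof -
    have iQ: "i \<in> Q" and jQ: "j \<in> Q" using i j EQ by auto
    have l: "i \<in> lat d" "j \<in> lat d" using iQ jQ cube_lat by (auto simp: Q_def)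
    have ui: "u i = 1" and uj: "u j = -1" using i j by (auto simp: E_def F_def AS_def)
    then have ij: "i \<noteq> j" by auto
    have n1: "1 \<le> norm1 d (i - j)" using norm1_pos[OF l ij] .
    have "j \<in> cube d (2 * l) i" using cube_pair iQ jQ by (simp add: Q_def)
    then have n2: "norm1 d (i - j) \<le> int d * int (2 * l)" by (rule norm1_cube_le)
    have "(2 * real d * real l) powr (-p) \<le> real_of_int (norm1 d (i - j)) powr (-p)"
    proof (rule powr_mono2')
      show "- p \<le> 0" using s0 by (simp add: p_def)
      show "0 < real_of_int (norm1 d (i - j))" using n1 by simp
      have "real_of_int (norm1 d (i - j)) \<le> real_of_int (int d * int (2 * l))" using n2 by (simp only: of_int_le_iff)
      then show "real_of_int (norm1 d (i - j)) \<le> 2 * real d * real l" by simp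
    qed
    then have "lam * (2 * real d * real l) powr (-p) \<le> lam * real_of_int (norm1 d (i - j)) powr (-p)"
      using lam0 by (intro mult_left_mono) auto
    also have "\<dots> \<le> J i j" using Jlow[OF l ij] by (simp add: p_def)
    finally have "lam * (2 * real d * real l) powr (-p) \<le> J i j" .
    then show ?thesis using ui uj by (simp add: w_def)
  qed
  have "real (card E) * (real (card F) * w) \<le> (\<Sum>i\<in>E. \<Sum>j\<in>F. J i j * (1 - u i * u j))"
  proof (rule sum_bounded_below)
    fix i assume i: "i \<in> E"
    show "real (card F) * w \<le> (\<Sum>j\<in>F. J i j * (1 - u i * u j))"
      by (rule sum_bounded_below) (rule tw[OF i])
  qed
  also have "\<dots> \<le> (\<Sum>i\<in>E. \<Sum>j\<in>Q. J i j * (1 - u i * u j))"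
  proof (rule sum_mono)
    fix i assume i: "i \<in> E"
    show "(\<Sum>j\<in>F. J i j * (1 - u i * u j)) \<le> (\<Sum>j\<in>Q. J i j * (1 - u i * u j))"
      by (rule sum_mono2[OF finQ EQ(2)]) (use t0 i EQ in auto)
  qed
  also have "\<dots> \<le> (\<Sum>i\<in>Q. \<Sum>j\<in>Q. J i j * (1 - u i * u j))"
    by (rule sum_mono2[OF finQ EQ(1)]) (use t0 in \<open>auto intro: sum_nonneg\<close>)
  also have "\<dots> = Iint J (cube d l q) (cube d l q) u" by (simp add: Iint_def Q_def)
  finally have main: "real (card E) * (real (card F) * w) \<le> Iint J (cube d l q) (cube d l q) u" .
  have "(a * real l ^ d) * ((a * real l ^ d) * w) \<le> real (card E) * (real (card F) * w)"
  proof (rule mult_mono)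
    show "a * real l ^ d * w \<le> real (card F) * w" using cF w0 by (rule mult_right_mono)
  qed (use cE a0 w0 in auto)
  moreover have "(a * real l ^ d) * ((a * real l ^ d) * w) = Cf d s lam Lam * real l powr (real d - s)"
  proof -
    have l0: "0 < real l" using l1 by simp
    have "(2 * real d * real l) powr (-p) = (2 * real d) powr (-p) * real l powr (-p)" by (rule powr_mult)
    moreover have "real l ^ d = real l powr real d" using l0 by (simp add: powr_realpow)
    moreover have "real l powr real d * real l powr real d * real l powr (-p) = real l powr (real d - s)"
      by (simp add: powr_add[symmetric] p_def)
    ultimately show ?thesis
      by (simp add: w_def Cf_def a_def p_def power2_eq_square algebra_simps)
  qed
  ultimately show ?thesis using main by linarith
qed

end


theorem mainTheorem13:
  fixes d :: nat and s lam Lam :: real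
  assumes "d \<ge> 2" and "0 < s" and "s < 1" and "0 < lam" and "lam \<le> Lam"
  shows "\<exists>c>0. \<forall>J u q l.
     J_nonneg d J \<and> J1 d J \<and> J2 d J \<and> J5 d J \<and> JP d s lam Lam J \<and>
     q \<in> lat d \<and> minimizer d J (cube d l q) u \<and> q \<in> bdry d u \<longrightarrow>
     Iint J (cube d l q) (cube d l q) u \<ge> c * real l powr (real d - s)"
proof (intro exI[of _ "Cf d s lam Lam"] conjI allI impI)
  show "0 < Cf d s lam Lam" by (rule Cf_pos) (use assms in auto)
  fix J u q l
  assume H: "J_nonneg d J \<and> J1 d J \<and> J2 d J \<and> J5 d J \<and> JP d s lam Lam J \<and>
     q \<in> lat d \<and> minimizer d J (cube d l q) u \<and> q \<in> bdry d u"
  interpret setting d s lam Lam J using assms H by unfold_locales auto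
  show "Cf d s lam Lam * real l powr (real d - s) \<le> Iint J (cube d l q) (cube d l q) u"
  proof (cases "l = 0")
    case True
    have cu: "config d u" using H by (simp add: minimizer_def)
    have "0 \<le> Iint J (cube d l q) (cube d l q) u"
      unfolding Iint_def
    proof (intro sum_nonneg)
      fix i j assume i: "i \<in> cube d l q" and j: "j \<in> cube d l q"
      have l: "i \<in> lat d" "j \<in> lat d" using i j cube_lat by auto
      have "0 \<le> 1 - u i * u j" using config_lat[OF cu l(1)] config_lat[OF cu l(2)] by auto
      then show "0 \<le> J i j * (1 - u i * u j)" using J0[OF l] by simp
    qed
    then show ?thesis using True by simp
  next
    case False
    then show ?thesis using main_bound H by auto
  qed
qed

end
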